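(* Let $T$ be a tree and $e$ an edge of $T$. Let $T'$ and $T''$ be the two subtrees obtained by deleting $e$. Let $S(T')$ be an optimal s-sequence for Problem A$(T')$ and $S(T'')$ an optimal s-sequence for Problem A$(T'')$. Then there exists an optimal s-sequence for Problem A$^{(e)}(T)$ in which the edges of $T'$ appear in the same relative order as in $S(T')$ and the edges of $T''$ appear in the same relative order as in $S(T'')$.
   Context: Let $T$ be a tree with a length $c_e>0$ for each edge and a nonnegative weight $w_{\{u,v\}}$ for each unordered vertex pair, with $w_{\{v,v\}}=0$. Pairs with positive weight are relevant pairs (r-pairs). For a subtree $T'$ of $T$, Problem A$(T')$ is defined as follows. Its r-pairs are those r-pairs of $T$ with both vertices in $T'$, keeping the same weights. An s-sequence for $T'$ is an ordering $(e_1,\dots,e_k)$ of all edges of $T'$, where $e_i$ is completed at time $\sum_{j\le i}c_{e_j}$. The connection time $t_{\{u,v\}}$ of an r-pair is the completion time of the last-built edge of the unique $u$–$v$ path in $T'$. Problem A$(T')$ asks for an s-sequence minimizing $\sum w_{\{u,v\}}t_{\{u,v\}}$ over these r-pairs. Problem A$^{(e)}(T)$ is Problem A$(T)$ with the additional constraint that edge $e$ is the last edge in the s-sequence. *)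

theory Defs
  imports Complex_Main
begin

definition is_path :: "'a set set \<Rightarrow> 'a \<Rightarrow> 'a \<Rightarrow> 'a list \<Rightarrow> bool" where
  "is_path E u v xs \<longleftrightarrow> xs \<noteq> [] \<and> hd xs = u \<and> last xs = v \<and> distinct xs \<and>
     (\<forall>i. Suc i < length xs \<longrightarrow> {xs ! i, xs ! Suc i} \<in> E)"

definition path_edges :: "'a list \<Rightarrow> 'a set set" where
  "path_edges xs = {{xs ! i, xs ! Suc i} | i. Suc i < length xs}"

definition is_tree :: "'a set \<Rightarrow> 'a set set \<Rightarrow> bool" where
  "is_tree V E \<longleftrightarrow> finite V \<and> V \<noteq> {} \<and>
     (\<forall>f\<in>E. \<exists>u v. f = {u, v} \<and> u \<noteq> v \<and> u \<in> V \<and> v \<in> V) \<and>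
     (\<forall>u\<in>V. \<forall>v\<in>V. \<exists>!xs. is_path E u v xs)"

definition tree_path :: "'a set set \<Rightarrow> 'a \<Rightarrow> 'a \<Rightarrow> 'a list" where
  "tree_path E u v = (THE xs. is_path E u v xs)"

definition s_sequence :: "'a set set \<Rightarrow> 'a set list \<Rightarrow> bool" where
  "s_sequence E s \<longleftrightarrow> distinct s \<and> set s = E"

definition completion_time :: "('a set \<Rightarrow> real) \<Rightarrow> 'a set list \<Rightarrow> 'a set \<Rightarrow> real" where
  "completion_time c s f = sum_list (map c (takeWhile (\<lambda>g. g \<noteq> f) s)) + c f"

definition connection_time :: "'a set set \<Rightarrow> ('a set \<Rightarrow> real) \<Rightarrow> 'a set list \<Rightarrow> 'a \<Rightarrow> 'a \<Rightarrow> real" where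
  "connection_time E c s u v = Max (completion_time c s ` path_edges (tree_path E u v))"

text \<open>Connection time of an unordered pair p = {u,v}, u \<noteq> v (well defined
  since the v-u path is the reverse of the u-v path).\<close>
definition pair_connection_time :: "'a set set \<Rightarrow> ('a set \<Rightarrow> real) \<Rightarrow> 'a set list \<Rightarrow> 'a set \<Rightarrow> real" where
  "pair_connection_time E c s p = (THE t. \<exists>u v. p = {u, v} \<and> u \<noteq> v \<and> t = connection_time E c s u v)"

text \<open>Objective of Problem A for the (sub)tree (V,E): sum of w_p t_p over the
  r-pairs p (pairs of distinct vertices of V with positive weight).\<close>
definition cost :: "'a set \<Rightarrow> 'a set set \<Rightarrow> ('a set \<Rightarrow> real) \<Rightarrow> ('a set \<Rightarrow> real) \<Rightarrow> 'a set list \<Rightarrow> real" where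
  "cost V E c w s = (\<Sum>p\<in>{{u, v} | u v. u \<in> V \<and> v \<in> V \<and> u \<noteq> v \<and> w {u, v} > 0}.
      w p * pair_connection_time E c s p)"

definition optimal_A :: "'a set \<Rightarrow> 'a set set \<Rightarrow> ('a set \<Rightarrow> real) \<Rightarrow> ('a set \<Rightarrow> real) \<Rightarrow> 'a set list \<Rightarrow> bool" where
  "optimal_A V E c w s \<longleftrightarrow> s_sequence E s \<and>
     (\<forall>s'. s_sequence E s' \<longrightarrow> cost V E c w s \<le> cost V E c w s')"

definition optimal_A_last :: "'a set \<Rightarrow> 'a set set \<Rightarrow> ('a set \<Rightarrow> real) \<Rightarrow> ('a set \<Rightarrow> real) \<Rightarrow> 'a set \<Rightarrow> 'a set list \<Rightarrow> bool" where
  "optimal_A_last V E c w e s \<longleftrightarrow> s_sequence E s \<and> s \<noteq> [] \<and> last s = e \<and>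
     (\<forall>s'. s_sequence E s' \<and> s' \<noteq> [] \<and> last s' = e \<longrightarrow> cost V E c w s \<le> cost V E c w s')"

definition comp_vertices :: "'a set \<Rightarrow> 'a set set \<Rightarrow> 'a set \<Rightarrow> 'a \<Rightarrow> 'a set" where
  "comp_vertices V E e x = {y \<in> V. \<exists>xs. is_path (E - {e}) x y xs}"

definition comp_edges :: "'a set \<Rightarrow> 'a set set \<Rightarrow> 'a set \<Rightarrow> 'a \<Rightarrow> 'a set set" where
  "comp_edges V E e x = {f \<in> E - {e}. f \<subseteq> comp_vertices V E e x}"

end

theory Submission
  imports Defs
begin

definition pre :: "'e list \<Rightarrow> 'e \<Rightarrow> 'e set" where
  "pre s x = set (takeWhile (\<lambda>y. y \<noteq> x) s)"

definition Acost :: "('e set \<Rightarrow> real) \<Rightarrow> ('e \<Rightarrow> real) \<Rightarrow> 'e set \<Rightarrow> 'e list \<Rightarrow> real" where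
  "Acost f c U s = (\<Sum>x\<in>U. c x * (f U - f (pre s x)))"

definition supermod :: "('e set \<Rightarrow> real) \<Rightarrow> 'e set \<Rightarrow> bool" where
  "supermod f U \<longleftrightarrow> (\<forall>A B. A \<subseteq> U \<longrightarrow> B \<subseteq> U \<longrightarrow> f A + f B \<le> f (A \<union> B) + f (A \<inter> B))"

lemma pre_subset: "pre s x \<subseteq> set s"
  unfolding pre_def by (meson set_takeWhileD subsetI)

lemma pre_notin: "x \<notin> pre s x"
  unfolding pre_def by (metis (mono_tags, lifting) set_takeWhileD)

lemma pre_Nil[simp]: "pre [] x = {}"
  unfolding pre_def by simp

lemma pre_Cons: "pre (z # zs) x = (if z = x then {} else insert z (pre zs x))"
  unfolding pre_def by (cases "z = x") simp_all

lemma pre_filter: "P x \<Longrightarrow> pre (filter P s) x = pre s x \<inter> {y. P y}"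
  by (induction s) (auto simp: pre_Cons)

lemma pre_append1: "x \<notin> set xs \<Longrightarrow> pre (xs @ ys) x = set xs \<union> pre ys x"
  by (induction xs) (auto simp: pre_Cons)

lemma pre_append2: "x \<in> set xs \<Longrightarrow> pre (xs @ ys) x = pre xs x"
  by (induction xs) (auto simp: pre_Cons)

lemma pre_excl: "distinct s \<Longrightarrow> x \<in> set s \<Longrightarrow> y \<in> set s \<Longrightarrow> x \<noteq> y \<Longrightarrow>
   (x \<in> pre s y) \<longleftrightarrow> (y \<notin> pre s x)"
proof (induction s)
  case Nil then show ?case by simp
next
  case (Cons z zs)
  then show ?case using pre_subset[of zs] by (auto simp: pre_Cons)
qed

lemma pre_trans: "distinct s \<Longrightarrow> y \<in> pre s z \<Longrightarrow> pre s y \<subseteq> pre s z"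
proof (induction s)
  case Nil then show ?case by (simp add: pre_def)
next
  case (Cons a s)
  then show ?case using pre_subset[of s] by (auto simp: pre_Cons split: if_splits)
qed

lemma sum_pair_swap:
  fixes c :: "'e \<Rightarrow> real"
  assumes fin: "finite U" and TU: "T \<subseteq> U" and ds: "distinct s" and ss: "set s = U"
  shows "(\<Sum>x\<in>U-T. c x * sum c (T - pre s x)) = (\<Sum>y\<in>T. c y * sum c (pre s y - T))"
proof -
  have finT: "finite T" using fin TU finite_subset by blast
  have "(\<Sum>x\<in>U-T. c x * sum c (T - pre s x)) = (\<Sum>x\<in>U-T. \<Sum>y\<in>T. if y \<notin> pre s x then c x * c y else 0)"
  proof (rule sum.cong[OF refl])
    fix x assume "x \<in> U - T"
    have "T - pre s x = {y\<in>T. y \<notin> pre s x}" by auto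
    then have "sum c (T - pre s x) = (\<Sum>y\<in>T. if y \<notin> pre s x then c y else 0)"
      using sum.inter_filter[OF finT] by simp
    then show "c x * sum c (T - pre s x) = (\<Sum>y\<in>T. if y \<notin> pre s x then c x * c y else 0)"
      by (auto simp: sum_distrib_left intro!: sum.cong)
  qed
  also have "... = (\<Sum>y\<in>T. \<Sum>x\<in>U-T. if y \<notin> pre s x then c x * c y else 0)"
    by (rule sum.swap)
  also have "... = (\<Sum>y\<in>T. \<Sum>x\<in>U-T. if x \<in> pre s y then c x * c y else 0)"
  proof (intro sum.cong refl)
    fix y x assume y: "y \<in> T" and x: "x \<in> U - T"
    have "x \<noteq> y" using x y by auto
    moreover have "x \<in> set s" "y \<in> set s" using x y TU ss by auto
    ultimately have "(x \<in> pre s y) = (y \<notin> pre s x)" using pre_excl[OF ds] by blast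
    then show "(if y \<notin> pre s x then c x * c y else 0) = (if x \<in> pre s y then c x * c y else 0)" by simp
  qed
  also have "... = (\<Sum>y\<in>T. c y * sum c (pre s y - T))"
  proof (rule sum.cong[OF refl])
    fix y assume "y \<in> T"
    have "pre s y - T = {x\<in>U-T. x \<in> pre s y}" using pre_subset[of s y] ss by auto
    then have "sum c (pre s y - T) = (\<Sum>x\<in>U-T. if x \<in> pre s y then c x else 0)"
      using sum.inter_filter[of "U-T"] fin by simp
    then show "(\<Sum>x\<in>U-T. if x \<in> pre s y then c x * c y else 0) = c y * sum c (pre s y - T)"
      by (auto simp: sum_distrib_left mult.commute intro!: sum.cong)
  qed
  finally show ?thesis .
qed

lemma move_front:
  fixes f :: "'e set \<Rightarrow> real" and c :: "'e \<Rightarrow> real"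
  assumes fin: "finite U" and TU: "T \<subseteq> U" and sm: "supermod f U"
    and lam: "\<forall>S\<subseteq>U. f S \<le> l * sum c S" and fT: "f T = l * sum c T"
    and c0: "\<forall>x\<in>U. c x \<ge> 0" and ds: "distinct s" and ss: "set s = U"
  shows "Acost f c U s - Acost f c U (filter (\<lambda>x. x\<in>T) s @ filter (\<lambda>x. x\<notin>T) s)
     \<ge> (\<Sum>x\<in>T. c x * (l * sum c (pre s x \<union> T) - f (pre s x \<union> T)))"
proof -
  let ?t = "filter (\<lambda>x. x\<in>T) s @ filter (\<lambda>x. x\<notin>T) s"
  have finT: "finite T" using fin TU finite_subset by blast
  have setT: "set (filter (\<lambda>x. x\<in>T) s) = T" using TU ss by auto
  have preS: "pre s x \<subseteq> U" for x using pre_subset[of s x] ss by simp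
  have preT: "pre ?t x = pre s x \<inter> T" if "x\<in>T" for x
  proof -
    have "x \<in> set (filter (\<lambda>x. x\<in>T) s)" using setT that by simp
    then have "pre ?t x = pre (filter (\<lambda>x. x\<in>T) s) x" by (rule pre_append2)
    also have "... = pre s x \<inter> T" using pre_filter[of "\<lambda>x. x\<in>T" x s] that by auto
    finally show ?thesis .
  qed
  have preN: "pre ?t x = pre s x \<union> T" if "x \<in> U - T" for x
  proof -
    have "x \<notin> set (filter (\<lambda>x. x\<in>T) s)" using setT that by simp
    then have "pre ?t x = T \<union> pre (filter (\<lambda>x. x\<notin>T) s) x" using pre_append1 setT by metis
    also have "... = pre s x \<union> T" using pre_filter[of "\<lambda>x. x\<notin>T" x s] that by auto
    finally show ?thesis .
  qed
  have "Acost f c U s - Acost f c U ?t = (\<Sum>x\<in>U. c x * (f (pre ?t x) - f (pre s x)))"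
    unfolding Acost_def by (simp add: sum_subtractf[symmetric] algebra_simps)
  also have "... = (\<Sum>x\<in>U-T. c x * (f (pre ?t x) - f (pre s x))) + (\<Sum>x\<in>T. c x * (f (pre ?t x) - f (pre s x)))"
    using sum.subset_diff[OF TU fin] by simp
  also have "... = (\<Sum>x\<in>U-T. c x * (f (pre s x \<union> T) - f (pre s x))) + (\<Sum>x\<in>T. c x * (f (pre s x \<inter> T) - f (pre s x)))"
    using preT preN by simp
  also have "... \<ge> (\<Sum>x\<in>U-T. c x * (l * sum c (T - pre s x))) + (\<Sum>x\<in>T. c x * (f T - f (pre s x \<union> T)))"
  proof (rule add_mono)
    show "(\<Sum>x\<in>U-T. c x * (l * sum c (T - pre s x))) \<le> (\<Sum>x\<in>U-T. c x * (f (pre s x \<union> T) - f (pre s x)))"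
    proof (rule sum_mono)
      fix x assume x: "x \<in> U - T"
      have "f (pre s x) + f T \<le> f (pre s x \<union> T) + f (pre s x \<inter> T)"
        using sm preS TU unfolding supermod_def by blast
      moreover have "f (pre s x \<inter> T) \<le> l * sum c (pre s x \<inter> T)" using lam preS by blast
      moreover have "sum c (T - pre s x) = sum c T - sum c (pre s x \<inter> T)"
      proof -
        have "T - pre s x = T - (pre s x \<inter> T)" by auto
        then show ?thesis using sum_diff[OF finT, of "pre s x \<inter> T" c] by auto
      qed
      then have "l * sum c (T - pre s x) = l * sum c T - l * sum c (pre s x \<inter> T)"
        by (simp add: right_diff_distrib)
      ultimately have "l * sum c (T - pre s x) \<le> f (pre s x \<union> T) - f (pre s x)"
        using fT by linarith
      then show "c x * (l * sum c (T - pre s x)) \<le> c x * (f (pre s x \<union> T) - f (pre s x))"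
        using c0 x by (simp add: mult_left_mono)
    qed
  next
    show "(\<Sum>x\<in>T. c x * (f T - f (pre s x \<union> T))) \<le> (\<Sum>x\<in>T. c x * (f (pre s x \<inter> T) - f (pre s x)))"
    proof (rule sum_mono)
      fix x assume x: "x \<in> T"
      have "f (pre s x) + f T \<le> f (pre s x \<union> T) + f (pre s x \<inter> T)"
        using sm preS TU unfolding supermod_def by blast
      then show "c x * (f T - f (pre s x \<union> T)) \<le> c x * (f (pre s x \<inter> T) - f (pre s x))"
        using c0 x TU by (intro mult_left_mono) auto
    qed
  qed
  also have "(\<Sum>x\<in>U-T. c x * (l * sum c (T - pre s x))) = l * (\<Sum>x\<in>U-T. c x * sum c (T - pre s x))"
    by (simp add: sum_distrib_left algebra_simps)
  also have "... = l * (\<Sum>y\<in>T. c y * sum c (pre s y - T))"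
    using sum_pair_swap[OF fin TU ds ss] by simp
  also have "l * (\<Sum>y\<in>T. c y * sum c (pre s y - T)) + (\<Sum>x\<in>T. c x * (f T - f (pre s x \<union> T)))
      = (\<Sum>x\<in>T. c x * (l * sum c (pre s x \<union> T) - f (pre s x \<union> T)))"
  proof -
    have "sum c (pre s x \<union> T) = sum c (pre s x - T) + sum c T" for x
    proof -
      have "pre s x \<union> T = (pre s x - T) \<union> T" by auto
      moreover have "finite (pre s x - T)" using preS fin finite_subset by blast
      ultimately show ?thesis using sum.union_disjoint[of "pre s x - T" T c] finT by auto
    qed
    then show ?thesis using fT
      by (simp add: sum_distrib_left sum.distrib[symmetric] algebra_simps)
  qed
  finally show ?thesis .
qed

lemma perm_front:
  assumes "distinct s" "set s = U" "T \<subseteq> U"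
  shows "distinct (filter (\<lambda>x. x\<in>T) s @ filter (\<lambda>x. x\<notin>T) s)"
    "set (filter (\<lambda>x. x\<in>T) s @ filter (\<lambda>x. x\<notin>T) s) = U"
  using assms by auto

lemma max_ratio_prefix:
  fixes f :: "'e set \<Rightarrow> real" and c :: "'e \<Rightarrow> real"
  assumes fin: "finite U" and ne: "U \<noteq> {}" and sm: "supermod f U" and f0: "f {} = 0"
   and cpos: "\<forall>x\<in>U. c x > 0" and ds: "distinct s" and ss: "set s = U"
   and opt: "\<forall>s'. distinct s' \<and> set s' = U \<longrightarrow> Acost f c U s \<le> Acost f c U s'"
  shows "\<exists>y\<in>U. \<forall>S\<subseteq>U. f S * sum c (insert y (pre s y)) \<le> f (insert y (pre s y)) * sum c S"
proof -
  define M where "M = {S. S \<subseteq> U \<and> S \<noteq> {}}"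
  define r where "r = (\<lambda>S. f S / sum c S)"
  have finM: "finite M" unfolding M_def using fin by (simp add: finite_subset[of _ "Pow U"] subset_iff)
  have neM: "M \<noteq> {}" unfolding M_def using ne by auto
  have cposS: "sum c S > 0" if "S \<subseteq> U" "S \<noteq> {}" for S
    using that fin cpos by (intro sum_pos) (auto intro: finite_subset)
  obtain T where TM: "T \<in> M" and Tmax: "\<forall>S\<in>M. r S \<le> r T"
  proof -
    have "Max (r ` M) \<in> r ` M" using finM neM by simp
    then obtain T where "T \<in> M" "r T = Max (r ` M)" by auto
    moreover have "\<forall>S\<in>M. r S \<le> Max (r ` M)" using finM by simp
    ultimately show ?thesis using that by auto
  qed
  define l where "l = r T"
  have TU: "T \<subseteq> U" and Tne: "T \<noteq> {}" using TM unfolding M_def by auto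
  have finT: "finite T" using TU fin finite_subset by blast
  have fT: "f T = l * sum c T" unfolding l_def r_def using cposS[OF TU Tne] by simp
  have lam: "\<forall>S\<subseteq>U. f S \<le> l * sum c S"
  proof (intro allI impI)
    fix S assume SU: "S \<subseteq> U"
    show "f S \<le> l * sum c S"
    proof (cases "S = {}")
      case True then show ?thesis using f0 by simp
    next
      case False
      then have "r S \<le> l" using Tmax SU unfolding M_def l_def by auto
      then show ?thesis unfolding r_def using cposS[OF SU False] by (simp add: pos_divide_le_eq)
    qed
  qed
  have preU: "pre s x \<subseteq> U" for x using pre_subset[of s x] ss by simp
  obtain y where yT: "y \<in> T" and ymax: "\<forall>z\<in>T. card (pre s z) \<le> card (pre s y)"
  proof -
    have "Max ((\<lambda>z. card (pre s z)) ` T) \<in> (\<lambda>z. card (pre s z)) ` T" using finT Tne by simp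
    then obtain y where "y \<in> T" "card (pre s y) = Max ((\<lambda>z. card (pre s z)) ` T)" by auto
    moreover have "\<forall>z\<in>T. card (pre s z) \<le> Max ((\<lambda>z. card (pre s z)) ` T)" using finT by simp
    ultimately show ?thesis using that by auto
  qed
  define P where "P = insert y (pre s y)"
  have PT: "pre s y \<union> T = P"
  proof -
    have "z \<in> pre s y" if "z \<in> T" "z \<noteq> y" for z
    proof (rule ccontr)
      assume nz: "z \<notin> pre s y"
      have "z \<in> set s" "y \<in> set s" using that yT TU ss by auto
      then have "y \<in> pre s z" using pre_excl[OF ds] nz that(2) by blast
      then have sub: "pre s y \<subseteq> pre s z" using pre_trans[OF ds] by blast
      have "y \<notin> pre s y" by (rule pre_notin)
      then have "pre s y \<subset> pre s z" using sub \<open>y \<in> pre s z\<close> by blast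
      moreover have "finite (pre s z)" using preU fin finite_subset by blast
      ultimately have "card (pre s y) < card (pre s z)" by (rule psubset_card_mono[rotated])
      then show False using ymax that(1) by fastforce
    qed
    then show ?thesis unfolding P_def using yT by auto
  qed
  have PU: "P \<subseteq> U" unfolding P_def using preU yT TU by auto
  have yU: "y \<in> U" using yT TU by auto
  show ?thesis
  proof (cases "f P = l * sum c P")
    case True
    have "f S * sum c P \<le> f P * sum c S" if "S \<subseteq> U" for S
    proof -
      have "f S \<le> l * sum c S" using lam that by blast
      then have "f S * sum c P \<le> l * sum c S * sum c P"
        using cposS[OF PU] unfolding P_def by (intro mult_right_mono) auto
      then show ?thesis using True by (simp add: algebra_simps)
    qed
    then show ?thesis using yU unfolding P_def by blast
  next
    case False
    then have lt: "f P < l * sum c P" using lam PU by force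
    let ?t = "filter (\<lambda>x. x\<in>T) s @ filter (\<lambda>x. x\<notin>T) s"
    have c0: "\<forall>x\<in>U. c x \<ge> 0" using cpos by force
    have mf: "Acost f c U s - Acost f c U ?t \<ge> (\<Sum>x\<in>T. c x * (l * sum c (pre s x \<union> T) - f (pre s x \<union> T)))"
      by (rule move_front[OF fin TU sm lam fT c0 ds ss])
    have nn: "\<forall>x\<in>T. 0 \<le> c x * (l * sum c (pre s x \<union> T) - f (pre s x \<union> T))"
    proof
      fix x assume "x \<in> T"
      have "pre s x \<union> T \<subseteq> U" using preU TU by auto
      then have "f (pre s x \<union> T) \<le> l * sum c (pre s x \<union> T)" using lam by blast
      then show "0 \<le> c x * (l * sum c (pre s x \<union> T) - f (pre s x \<union> T))"
        using c0 \<open>x \<in> T\<close> TU by (intro mult_nonneg_nonneg) auto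
    qed
    have "c y * (l * sum c (pre s y \<union> T) - f (pre s y \<union> T)) \<le> (\<Sum>x\<in>T. c x * (l * sum c (pre s x \<union> T) - f (pre s x \<union> T)))"
      using nn yT finT by (intro member_le_sum) auto
    moreover have "c y * (l * sum c (pre s y \<union> T) - f (pre s y \<union> T)) > 0"
      using PT lt cpos yU by simp
    ultimately have "Acost f c U ?t < Acost f c U s" using mf by linarith
    moreover have "Acost f c U s \<le> Acost f c U ?t" using opt perm_front[OF ds ss TU] by blast
    ultimately show ?thesis by linarith
  qed
qed

lemma Acost_append:
  fixes f :: "'e set \<Rightarrow> real" and c :: "'e \<Rightarrow> real"
  assumes d: "distinct (a @ b)" and sa: "set a = T" and sab: "set (a @ b) = U" and fin: "finite U"
  shows "Acost f c U (a @ b) = Acost f c T a + sum c T * (f U - f T)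
           + Acost (\<lambda>S. f (S \<union> T) - f T) c (U - T) b"
proof -
  have TU: "T \<subseteq> U" using sa sab by auto
  have finT: "finite T" using sa by auto
  have UT: "(U - T) \<union> T = U" using TU by auto
  have "Acost f c U (a @ b) = (\<Sum>x\<in>U-T. c x * (f U - f (pre (a@b) x))) + (\<Sum>x\<in>T. c x * (f U - f (pre (a@b) x)))"
    unfolding Acost_def using sum.subset_diff[OF TU fin] by simp
  also have "(\<Sum>x\<in>T. c x * (f U - f (pre (a@b) x))) = (\<Sum>x\<in>T. c x * (f T - f (pre a x)) + c x * (f U - f T))"
    using pre_append2[of _ a b] sa by (intro sum.cong) (auto simp: algebra_simps)
  also have "... = Acost f c T a + sum c T * (f U - f T)"
    unfolding Acost_def by (simp add: sum.distrib sum_distrib_right)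
  also have "(\<Sum>x\<in>U-T. c x * (f U - f (pre (a@b) x))) = Acost (\<lambda>S. f (S \<union> T) - f T) c (U - T) b"
    unfolding Acost_def UT
  proof (intro sum.cong refl)
    fix x assume "x \<in> U - T"
    then have "pre (a@b) x = set a \<union> pre b x" using sa by (intro pre_append1) auto
    then show "c x * (f U - f (pre (a@b) x)) = c x * (f U - f T - (f (pre b x \<union> T) - f T))"
      using sa by (simp add: Un_commute)
  qed
  finally show ?thesis by simp
qed

lemma Acost_cong:
  assumes "\<And>S. S \<subseteq> U \<Longrightarrow> f S = g S" and "set s \<subseteq> U"
  shows "Acost f c U s = Acost g c U s"
  unfolding Acost_def using assms pre_subset[of s] by (intro sum.cong) auto

definition opt_on :: "('e set \<Rightarrow> real) \<Rightarrow> ('e \<Rightarrow> real) \<Rightarrow> 'e set \<Rightarrow> 'e list \<Rightarrow> bool" where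
  "opt_on f c U s \<longleftrightarrow> distinct s \<and> set s = U \<and>
     (\<forall>s'. distinct s' \<and> set s' = U \<longrightarrow> Acost f c U s \<le> Acost f c U s')"

definition sep :: "('e set \<Rightarrow> real) \<Rightarrow> 'e set \<Rightarrow> 'e set \<Rightarrow> bool" where
  "sep f X Y \<longleftrightarrow> (\<forall>S\<subseteq>X \<union> Y. f S = f (S \<inter> X) + f (S \<inter> Y))"

lemma ratio_combine:
  fixes f :: "'e set \<Rightarrow> real" and c :: "'e \<Rightarrow> real"
  assumes sp: "sep f X Y" and disj: "X \<inter> Y = {}" and fin: "finite X" "finite Y"
    and c0: "\<forall>x\<in>X \<union> Y. c x \<ge> 0"
    and pX: "sum c TX > 0" and pY: "sum c TY > 0"
    and hX: "\<forall>S\<subseteq>X. f S * sum c TX \<le> f TX * sum c S"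
    and hY: "\<forall>S\<subseteq>Y. f S * sum c TY \<le> f TY * sum c S"
    and cmp: "f TY * sum c TX \<le> f TX * sum c TY"
  shows "\<forall>S\<subseteq>X \<union> Y. f S * sum c TX \<le> f TX * sum c S"
proof (intro allI impI)
  fix S assume SU: "S \<subseteq> X \<union> Y"
  define rX where "rX = f TX / sum c TX"
  define rY where "rY = f TY / sum c TY"
  have rXY: "rY \<le> rX" unfolding rX_def rY_def using pX pY cmp by (simp add: divide_simps mult.commute)
  have a1: "f (S \<inter> X) \<le> rX * sum c (S \<inter> X)"
    using hX[rule_format, of "S \<inter> X"] pX unfolding rX_def by (simp add: divide_simps mult.commute)
  have a2: "f (S \<inter> Y) \<le> rY * sum c (S \<inter> Y)"
    using hY[rule_format, of "S \<inter> Y"] pY unfolding rY_def by (simp add: divide_simps mult.commute)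
  have cSY: "sum c (S \<inter> Y) \<ge> 0" using c0 SU by (intro sum_nonneg) auto
  have a3: "rY * sum c (S \<inter> Y) \<le> rX * sum c (S \<inter> Y)" using rXY cSY by (rule mult_right_mono)
  have finS: "finite S" using SU fin finite_subset by blast
  have "sum c S = sum c (S \<inter> X) + sum c (S \<inter> Y)"
  proof -
    have "S = (S \<inter> X) \<union> (S \<inter> Y)" using SU by auto
    then have "sum c S = sum c ((S \<inter> X) \<union> (S \<inter> Y))" by simp
    also have "... = sum c (S \<inter> X) + sum c (S \<inter> Y)"
      using finS disj by (intro sum.union_disjoint) auto
    finally show ?thesis .
  qed
  moreover have "f S = f (S \<inter> X) + f (S \<inter> Y)" using sp SU unfolding sep_def by blast
  ultimately have "f S \<le> rX * sum c S" using a1 a2 a3 by (simp add: algebra_simps)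
  then show "f S * sum c TX \<le> f TX * sum c S" unfolding rX_def using pX
    by (simp add: divide_simps mult.commute)
qed


lemma merge_step:
  fixes f :: "'e set \<Rightarrow> real" and c :: "'e \<Rightarrow> real"
  assumes IH: "\<And>X' Y' f' \<sigma>' \<tau>'. card (X' \<union> Y') < card (X \<union> Y) \<Longrightarrow> finite X' \<Longrightarrow> finite Y' \<Longrightarrow>
      X' \<inter> Y' = {} \<Longrightarrow> \<forall>x\<in>X' \<union> Y'. c x > 0 \<Longrightarrow> supermod f' (X' \<union> Y') \<Longrightarrow> f' {} = 0 \<Longrightarrow>
      sep f' X' Y' \<Longrightarrow> opt_on f' c X' \<sigma>' \<Longrightarrow> opt_on f' c Y' \<tau>' \<Longrightarrow>
      \<exists>s. opt_on f' c (X' \<union> Y') s \<and> filter (\<lambda>x. x \<in> X') s = \<sigma>' \<and> filter (\<lambda>x. x \<in> Y') s = \<tau>'"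
    and finX: "finite X" and finY: "finite Y" and disj: "X \<inter> Y = {}"
    and cpos: "\<forall>x\<in>X \<union> Y. c x > 0" and sm: "supermod f (X \<union> Y)" and f0: "f {} = 0"
    and sp: "sep f X Y" and oX: "opt_on f c X \<sigma>" and oY: "opt_on f c Y \<tau>"
    and yX: "y \<in> X" and rat: "\<forall>S\<subseteq>X \<union> Y. f S * sum c (insert y (pre \<sigma> y)) \<le> f (insert y (pre \<sigma> y)) * sum c S"
  shows "\<exists>s. opt_on f c (X \<union> Y) s \<and> filter (\<lambda>x. x \<in> X) s = \<sigma> \<and> filter (\<lambda>x. x \<in> Y) s = \<tau>"
proof -
  define U where "U = X \<union> Y"
  have finU: "finite U" unfolding U_def using finX finY by simp
  have dsig: "distinct \<sigma>" and ssig: "set \<sigma> = X" using oX unfolding opt_on_def by auto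
  have dtau: "distinct \<tau>" and stau: "set \<tau> = Y" using oY unfolding opt_on_def by auto
  obtain ys zs where sig: "\<sigma> = ys @ y # zs" and yys: "y \<notin> set ys"
    using split_list_first[of y \<sigma>] yX ssig by auto
  define a where "a = ys @ [y]"
  define T where "T = set a"
  have preY: "pre \<sigma> y = set ys" unfolding sig using yys by (simp add: pre_append1 pre_Cons)
  have Tdef: "T = insert y (pre \<sigma> y)" unfolding T_def a_def preY by auto
  have sig2: "\<sigma> = a @ zs" unfolding sig a_def by simp
  have TX: "T \<subseteq> X" unfolding T_def using ssig sig2 by auto
  have TU: "T \<subseteq> U" using TX unfolding U_def by auto
  have Tne: "T \<noteq> {}" unfolding T_def a_def by simp
  have finT: "finite T" unfolding T_def by simp
  have cT: "sum c T > 0" using cpos TU Tne finT unfolding U_def by (intro sum_pos) auto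
  define l where "l = f T / sum c T"
  have fT: "f T = l * sum c T" unfolding l_def using cT by simp
  have lam: "\<forall>S\<subseteq>U. f S \<le> l * sum c S"
  proof (intro allI impI)
    fix S assume "S \<subseteq> U"
    then have "f S * sum c T \<le> f T * sum c S" using rat Tdef unfolding U_def by auto
    then show "f S \<le> l * sum c S" unfolding l_def using cT by (simp add: divide_simps mult.commute)
  qed
  define f' where "f' = (\<lambda>S. f (S \<union> T) - f T)"
  define X' where "X' = X - T"
  have szs: "set zs = X'" and dzs: "distinct zs" and da: "distinct a"
    using dsig ssig unfolding sig2 X'_def T_def by auto
  have UT: "U - T = X' \<union> Y" unfolding U_def X'_def using TX disj by auto
  have cardlt: "card (X' \<union> Y) < card (X \<union> Y)"
  proof -
    have "X' \<union> Y \<subset> X \<union> Y" using UT TU Tne unfolding U_def by auto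
    then show ?thesis using finU unfolding U_def by (simp add: psubset_card_mono)
  qed
  have c0: "\<forall>x\<in>U. c x \<ge> 0" using cpos unfolding U_def by force
  have sepf: "f S = f (S \<inter> X) + f (S \<inter> Y)" if "S \<subseteq> U" for S
    using sp that unfolding sep_def U_def by blast
  have f'Y: "f' S = f S" if "S \<subseteq> Y" for S
  proof -
    have "S \<union> T \<subseteq> U" using that TU unfolding U_def by auto
    then have "f (S \<union> T) = f ((S \<union> T) \<inter> X) + f ((S \<union> T) \<inter> Y)" by (rule sepf)
    moreover have "(S \<union> T) \<inter> X = T" using that TX disj by auto
    moreover have "(S \<union> T) \<inter> Y = S" using that TX disj by auto
    ultimately show ?thesis unfolding f'_def by simp
  qed
  have decX: "Acost f c X (g @ zs) = Acost f c T g + sum c T * (f X - f T) + Acost f' c X' zs"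
    if "distinct g" "set g = T" for g
  proof -
    have "distinct (g @ zs)" using that dzs szs unfolding X'_def by auto
    moreover have "set (g @ zs) = X" using that szs TX unfolding X'_def by auto
    ultimately show ?thesis using Acost_append[of g zs T X f c] that finX
      unfolding f'_def X'_def by simp
  qed
  have aopt: "Acost f c T a \<le> Acost f c T g" if "distinct g" "set g = T" for g
  proof -
    have "distinct (g @ zs)" "set (g @ zs) = X" using that dzs szs TX unfolding X'_def by auto
    then have "Acost f c X \<sigma> \<le> Acost f c X (g @ zs)" using oX unfolding opt_on_def by blast
    then show ?thesis using decX[OF that] decX[OF da T_def[symmetric]] unfolding sig2 by simp
  qed
  have o1: "opt_on f' c X' zs"
    unfolding opt_on_def
  proof (intro conjI allI impI)
    show "distinct zs" "set zs = X'" by (fact dzs, fact szs)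
    fix b assume b: "distinct b \<and> set b = X'"
    have "distinct (a @ b)" "set (a @ b) = X" using b da TX unfolding X'_def T_def by auto
    then have "Acost f c X \<sigma> \<le> Acost f c X (a @ b)" using oX unfolding opt_on_def by blast
    moreover have "Acost f c X (a @ b) = Acost f c T a + sum c T * (f X - f T) + Acost f' c X' b"
      using Acost_append[of a b T X f c] \<open>distinct (a @ b)\<close> \<open>set (a @ b) = X\<close> finX
      unfolding f'_def X'_def T_def by simp
    moreover have "Acost f c X \<sigma> = Acost f c T a + sum c T * (f X - f T) + Acost f' c X' zs"
      using decX[OF da T_def[symmetric]] sig2 by simp
    ultimately show "Acost f' c X' zs \<le> Acost f' c X' b" by simp
  qed
  have o2: "opt_on f' c Y \<tau>"
    unfolding opt_on_def
  proof (intro conjI allI impI)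
    show "distinct \<tau>" "set \<tau> = Y" by (fact dtau, fact stau)
    fix b assume b: "distinct b \<and> set b = Y"
    have "Acost f c Y \<tau> \<le> Acost f c Y b" using oY b unfolding opt_on_def by blast
    moreover have "Acost f' c Y \<tau> = Acost f c Y \<tau>" using f'Y stau by (intro Acost_cong) auto
    moreover have "Acost f' c Y b = Acost f c Y b" using f'Y b by (intro Acost_cong) auto
    ultimately show "Acost f' c Y \<tau> \<le> Acost f' c Y b" by simp
  qed
  have sm': "supermod f' (X' \<union> Y)"
    unfolding supermod_def
  proof (intro allI impI)
    fix A B assume A: "A \<subseteq> X' \<union> Y" and B: "B \<subseteq> X' \<union> Y"
    have "A \<union> T \<subseteq> X \<union> Y" "B \<union> T \<subseteq> X \<union> Y" using A B TU UT unfolding U_def by auto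
    then have "f (A \<union> T) + f (B \<union> T) \<le> f ((A \<union> T) \<union> (B \<union> T)) + f ((A \<union> T) \<inter> (B \<union> T))"
      using sm unfolding supermod_def by blast
    moreover have "(A \<union> T) \<union> (B \<union> T) = (A \<union> B) \<union> T" by auto
    moreover have "(A \<union> T) \<inter> (B \<union> T) = (A \<inter> B) \<union> T" by auto
    ultimately show "f' A + f' B \<le> f' (A \<union> B) + f' (A \<inter> B)" unfolding f'_def by simp
  qed
  have f'0: "f' {} = 0" unfolding f'_def by simp
  have sp': "sep f' X' Y"
    unfolding sep_def
  proof (intro allI impI)
    fix S assume S: "S \<subseteq> X' \<union> Y"
    have S1: "S \<union> T \<subseteq> U" using S TU UT by auto
    have e1: "(S \<union> T) \<inter> X = (S \<inter> X') \<union> T" using S TX disj unfolding X'_def by auto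
    have e2: "(S \<union> T) \<inter> Y = S \<inter> Y" using TX disj by auto
    have e3: "((S \<inter> X') \<union> T) \<inter> X = (S \<inter> X') \<union> T" using TX unfolding X'_def by auto
    have e4: "((S \<inter> X') \<union> T) \<inter> Y = {}" using TX disj unfolding X'_def by auto
    have "f (S \<union> T) = f ((S \<inter> X') \<union> T) + f (S \<inter> Y)" using sepf[OF S1] e1 e2 by simp
    moreover have "f' (S \<inter> Y) = f (S \<inter> Y)" by (rule f'Y) auto
    ultimately show "f' S = f' (S \<inter> X') + f' (S \<inter> Y)" unfolding f'_def by simp
  qed
  have finX': "finite X'" unfolding X'_def using finX by simp
  have disj': "X' \<inter> Y = {}" unfolding X'_def using disj by auto
  have cpos': "\<forall>x\<in>X' \<union> Y. c x > 0" using cpos unfolding X'_def by auto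
  obtain s2 where s2: "opt_on f' c (X' \<union> Y) s2" and f1: "filter (\<lambda>x. x \<in> X') s2 = zs"
      and f2: "filter (\<lambda>x. x \<in> Y) s2 = \<tau>"
    using IH[OF cardlt finX' finY disj' cpos' sm' f'0 sp' o1 o2] by blast
  have ds2: "distinct s2" and ss2: "set s2 = X' \<union> Y" using s2 unfolding opt_on_def by auto
  define s where "s = a @ s2"
  have ds: "distinct s"
  proof -
    have "set a \<subseteq> X" using TX T_def by simp
    then show ?thesis unfolding s_def using da ds2 ss2 disj T_def unfolding X'_def by auto
  qed
  have ss: "set s = U" unfolding s_def using ss2 UT TU T_def by auto
  have decU: "Acost f c U (g @ h) = Acost f c T g + sum c T * (f U - f T) + Acost f' c (X' \<union> Y) h"
    if "distinct (g @ h)" "set g = T" "set (g @ h) = U" for g h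
    using Acost_append[OF that finU, of f c] UT unfolding f'_def by simp
  have optS: "Acost f c U s \<le> Acost f c U t" if t: "distinct t" "set t = U" for t
  proof -
    let ?g = "filter (\<lambda>x. x\<in>T) t" and ?h = "filter (\<lambda>x. x\<notin>T) t"
    have mf: "Acost f c U t - Acost f c U (?g @ ?h) \<ge> (\<Sum>x\<in>T. c x * (l * sum c (pre t x \<union> T) - f (pre t x \<union> T)))"
      by (rule move_front[OF finU TU _ lam fT c0 t]) (use sm U_def in simp)
    have "(\<Sum>x\<in>T. c x * (l * sum c (pre t x \<union> T) - f (pre t x \<union> T))) \<ge> 0"
    proof (intro sum_nonneg)
      fix x assume "x \<in> T"
      have "pre t x \<union> T \<subseteq> U" using pre_subset[of t x] t TU by auto
      then have "f (pre t x \<union> T) \<le> l * sum c (pre t x \<union> T)" using lam by blast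
      then show "0 \<le> c x * (l * sum c (pre t x \<union> T) - f (pre t x \<union> T))"
        using c0 \<open>x \<in> T\<close> TU by (intro mult_nonneg_nonneg) auto
    qed
    then have 1: "Acost f c U (?g @ ?h) \<le> Acost f c U t" using mf by linarith
    have pg: "distinct (?g @ ?h)" "set (?g @ ?h) = U" using perm_front[OF t TU] by auto
    have sg: "set ?g = T" using t TU by auto
    have dg: "distinct ?g" using t by auto
    have sh: "set ?h = X' \<union> Y" using t UT by auto
    have dh: "distinct ?h" using t by auto
    have 2: "Acost f' c (X' \<union> Y) s2 \<le> Acost f' c (X' \<union> Y) ?h" using s2 sh dh unfolding opt_on_def by blast
    have 3: "Acost f c T a \<le> Acost f c T ?g" using aopt[OF dg sg] .
    have "Acost f c U s = Acost f c T a + sum c T * (f U - f T) + Acost f' c (X' \<union> Y) s2"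
      using decU[of a s2] ds ss unfolding s_def T_def by simp
    also have "... \<le> Acost f c T ?g + sum c T * (f U - f T) + Acost f' c (X' \<union> Y) ?h"
      using 2 3 by simp
    also have "... = Acost f c U (?g @ ?h)" using decU[OF pg(1) sg pg(2)] by simp
    finally show ?thesis using 1 by simp
  qed
  have fX: "filter (\<lambda>x. x \<in> X) s = \<sigma>"
  proof -
    have "filter (\<lambda>x. x \<in> X) a = a" using TX T_def by (simp add: subset_iff)
    moreover have "filter (\<lambda>x. x \<in> X) s2 = filter (\<lambda>x. x \<in> X') s2"
      using ss2 disj unfolding X'_def by (intro filter_cong) auto
    ultimately show ?thesis unfolding s_def sig2 using f1 by simp
  qed
  have fY: "filter (\<lambda>x. x \<in> Y) s = \<tau>"
  proof -
    have "filter (\<lambda>x. x \<in> Y) a = []" using TX T_def disj by (auto simp: filter_empty_conv)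
    then show ?thesis unfolding s_def using f2 by simp
  qed
  show ?thesis using ds ss optS fX fY unfolding opt_on_def U_def by blast
qed

lemma supermod_mono: "supermod f U \<Longrightarrow> V \<subseteq> U \<Longrightarrow> supermod f V"
  unfolding supermod_def by (meson subset_trans)

lemma sep_commute: "sep f X Y \<Longrightarrow> sep f Y X"
  unfolding sep_def
proof (intro allI impI)
  fix S assume a: "\<forall>S\<subseteq>X \<union> Y. f S = f (S \<inter> X) + f (S \<inter> Y)" and "S \<subseteq> Y \<union> X"
  then have "S \<subseteq> X \<union> Y" by blast
  then show "f S = f (S \<inter> Y) + f (S \<inter> X)" using a by simp
qed

theorem merge:
  fixes f :: "'e set \<Rightarrow> real" and c :: "'e \<Rightarrow> real"
  assumes "finite X" "finite Y" "X \<inter> Y = {}" "\<forall>x\<in>X \<union> Y. c x > 0" "supermod f (X \<union> Y)" "f {} = 0"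
    "sep f X Y" "opt_on f c X \<sigma>" "opt_on f c Y \<tau>"
  shows "\<exists>s. opt_on f c (X \<union> Y) s \<and> filter (\<lambda>x. x \<in> X) s = \<sigma> \<and> filter (\<lambda>x. x \<in> Y) s = \<tau>"
  using assms
proof (induction "card (X \<union> Y)" arbitrary: X Y f \<sigma> \<tau> rule: less_induct)
  case less
  have dsig: "distinct \<sigma>" and ssig: "set \<sigma> = X" using less.prems(8) unfolding opt_on_def by auto
  have dtau: "distinct \<tau>" and stau: "set \<tau> = Y" using less.prems(9) unfolding opt_on_def by auto
  show ?case
  proof (cases "X = {}")
    case True
    then have "\<sigma> = []" using ssig by simp
    then show ?thesis using True less.prems(9) stau by (intro exI[of _ \<tau>]) (auto simp: filter_id_conv)
  next
    case XNE: False
    show ?thesis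
    proof (cases "Y = {}")
      case True
      then have "\<tau> = []" using stau by simp
      then show ?thesis using True less.prems(8) ssig by (intro exI[of _ \<sigma>]) (auto simp: filter_id_conv)
    next
      case YNE: False
      have smX: "supermod f X" and smY: "supermod f Y" using supermod_mono less.prems(5) by blast+
      have cX: "\<forall>x\<in>X. c x > 0" and cY: "\<forall>x\<in>Y. c x > 0" using less.prems(4) by auto
      obtain yx where yx: "yx \<in> X" and hX: "\<forall>S\<subseteq>X. f S * sum c (insert yx (pre \<sigma> yx)) \<le> f (insert yx (pre \<sigma> yx)) * sum c S"
        using max_ratio_prefix[OF less.prems(1) XNE smX less.prems(6) cX dsig ssig] less.prems(8)
        unfolding opt_on_def by blast
      obtain yy where yy: "yy \<in> Y" and hY: "\<forall>S\<subseteq>Y. f S * sum c (insert yy (pre \<tau> yy)) \<le> f (insert yy (pre \<tau> yy)) * sum c S"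
        using max_ratio_prefix[OF less.prems(2) YNE smY less.prems(6) cY dtau stau] less.prems(9)
        unfolding opt_on_def by blast
      define TX where "TX = insert yx (pre \<sigma> yx)"
      define TY where "TY = insert yy (pre \<tau> yy)"
      have TXs: "TX \<subseteq> X" unfolding TX_def using yx pre_subset[of \<sigma> yx] ssig by auto
      have TYs: "TY \<subseteq> Y" unfolding TY_def using yy pre_subset[of \<tau> yy] stau by auto
      have pX: "sum c TX > 0" using cX TXs less.prems(1)
        by (intro sum_pos) (auto simp: TX_def intro: finite_subset)
      have pY: "sum c TY > 0" using cY TYs less.prems(2)
        by (intro sum_pos) (auto simp: TY_def intro: finite_subset)
      have c0: "\<forall>x\<in>X \<union> Y. c x \<ge> 0" using less.prems(4) by force
      show ?thesis
      proof (cases "f TY * sum c TX \<le> f TX * sum c TY")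
        case True
        have rat: "\<forall>S\<subseteq>X \<union> Y. f S * sum c TX \<le> f TX * sum c S"
          by (rule ratio_combine[OF less.prems(7) less.prems(3) less.prems(1,2) c0 pX pY hX[folded TX_def] hY[folded TY_def] True])
        show ?thesis
          by (rule merge_step[OF less.hyps less.prems yx]) (use rat TX_def in simp_all)
      next
        case False
        have c0': "\<forall>x\<in>Y \<union> X. c x \<ge> 0" using c0 by auto
        have rat: "\<forall>S\<subseteq>Y \<union> X. f S * sum c TY \<le> f TY * sum c S"
        proof (rule ratio_combine[OF sep_commute[OF less.prems(7)] _ less.prems(2,1) c0' pY pX hY[folded TY_def] hX[folded TX_def]])
          show "Y \<inter> X = {}" using less.prems(3) by blast
          show "f TX * sum c TY \<le> f TY * sum c TX" using False by linarith
        qed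
        have "\<exists>s. opt_on f c (Y \<union> X) s \<and> filter (\<lambda>x. x \<in> Y) s = \<tau> \<and> filter (\<lambda>x. x \<in> X) s = \<sigma>"
        proof (rule merge_step[OF _ less.prems(2,1) _ _ _ less.prems(6) sep_commute[OF less.prems(7)] less.prems(9,8) yy])
          show "\<forall>S\<subseteq>Y \<union> X. f S * sum c (insert yy (pre \<tau> yy)) \<le> f (insert yy (pre \<tau> yy)) * sum c S"
            using rat TY_def by simp
          show "Y \<inter> X = {}" using less.prems(3) by auto
          show "\<forall>x\<in>Y \<union> X. 0 < c x" using less.prems(4) by auto
          have "Y \<union> X = X \<union> Y" by blast
          then show "supermod f (Y \<union> X)" using less.prems(5) by simp
        next
          fix X' Y' :: "'e set" and f' :: "'e set \<Rightarrow> real" and \<sigma>' \<tau>' :: "'e list"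
          assume "card (X' \<union> Y') < card (Y \<union> X)"
          moreover have "Y \<union> X = X \<union> Y" by blast
          ultimately have "card (X' \<union> Y') < card (X \<union> Y)" by simp
          moreover assume "finite X'" "finite Y'" "X' \<inter> Y' = {}" "\<forall>x\<in>X' \<union> Y'. 0 < c x"
            "supermod f' (X' \<union> Y')" "f' {} = 0" "sep f' X' Y'" "opt_on f' c X' \<sigma>'" "opt_on f' c Y' \<tau>'"
          ultimately show "\<exists>s. opt_on f' c (X' \<union> Y') s \<and> filter (\<lambda>x. x \<in> X') s = \<sigma>' \<and> filter (\<lambda>x. x \<in> Y') s = \<tau>'"
            using less.hyps by blast
        qed
        moreover have "Y \<union> X = X \<union> Y" by blast
        ultimately show ?thesis by metis
      qed
    qed
  qed
qed


fun pedges :: "'a list \<Rightarrow> 'a set set" where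
  "pedges [] = {}"
| "pedges [x] = {}"
| "pedges (x # y # zs) = insert {x, y} (pedges (y # zs))"

lemma path_edges_Nil: "path_edges [] = {}"
  unfolding path_edges_def by simp

lemma path_edges_single: "path_edges [x] = {}"
  unfolding path_edges_def by simp

lemma path_edges_Cons2: "path_edges (x # y # zs) = insert {x, y} (path_edges (y # zs))"
proof -
  have "path_edges (x # y # zs) = {{(x # y # zs) ! i, (x # y # zs) ! Suc i} | i. Suc i < length (x # y # zs)}"
    unfolding path_edges_def ..
  also have "... = insert {x, y} {{(y # zs) ! i, (y # zs) ! Suc i} | i. Suc i < length (y # zs)}"
  proof (intro set_eqI iffI)
    fix f assume "f \<in> {{(x # y # zs) ! i, (x # y # zs) ! Suc i} | i. Suc i < length (x # y # zs)}"
    then obtain i where i: "f = {(x # y # zs) ! i, (x # y # zs) ! Suc i}" "Suc i < length (x # y # zs)" by blast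
    show "f \<in> insert {x, y} {{(y # zs) ! i, (y # zs) ! Suc i} | i. Suc i < length (y # zs)}"
    proof (cases i)
      case 0 then show ?thesis using i by simp
    next
      case (Suc j)
      then have "f = {(y # zs) ! j, (y # zs) ! Suc j} \<and> Suc j < length (y # zs)" using i by simp
      then show ?thesis by blast
    qed
  next
    fix f assume "f \<in> insert {x, y} {{(y # zs) ! i, (y # zs) ! Suc i} | i. Suc i < length (y # zs)}"
    then show "f \<in> {{(x # y # zs) ! i, (x # y # zs) ! Suc i} | i. Suc i < length (x # y # zs)}"
    proof
      assume "f = {x, y}"
      then show ?thesis by (intro CollectI exI[of _ 0]) simp
    next
      assume "f \<in> {{(y # zs) ! i, (y # zs) ! Suc i} | i. Suc i < length (y # zs)}"
      then obtain i where "f = {(y # zs) ! i, (y # zs) ! Suc i}" "Suc i < length (y # zs)" by blast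
      then show ?thesis by (intro CollectI exI[of _ "Suc i"]) simp
    qed
  qed
  also have "... = insert {x, y} (path_edges (y # zs))" unfolding path_edges_def ..
  finally show ?thesis .
qed

lemma path_edges_pedges: "path_edges xs = pedges xs"
  by (induction xs rule: pedges.induct) (simp_all add: path_edges_Nil path_edges_single path_edges_Cons2)

lemma edges_cond_pedges:
  "(\<forall>i. Suc i < length xs \<longrightarrow> {xs ! i, xs ! Suc i} \<in> F) \<longleftrightarrow> pedges xs \<subseteq> F"
proof (induction xs rule: pedges.induct)
  case 1 then show ?case by simp
next
  case (2 x) then show ?case by simp
next
  case (3 x y zs)
  have "(\<forall>i. Suc i < length (x # y # zs) \<longrightarrow> {(x # y # zs) ! i, (x # y # zs) ! Suc i} \<in> F) \<longleftrightarrow>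
        {x, y} \<in> F \<and> (\<forall>i. Suc i < length (y # zs) \<longrightarrow> {(y # zs) ! i, (y # zs) ! Suc i} \<in> F)"
  proof
    assume h: "\<forall>i. Suc i < length (x # y # zs) \<longrightarrow> {(x # y # zs) ! i, (x # y # zs) ! Suc i} \<in> F"
    have "{x, y} \<in> F" using h[rule_format, of 0] by simp
    moreover have "\<forall>i. Suc i < length (y # zs) \<longrightarrow> {(y # zs) ! i, (y # zs) ! Suc i} \<in> F"
    proof (intro allI impI)
      fix i assume "Suc i < length (y # zs)"
      then show "{(y # zs) ! i, (y # zs) ! Suc i} \<in> F" using h[rule_format, of "Suc i"] by simp
    qed
    ultimately show "{x, y} \<in> F \<and> (\<forall>i. Suc i < length (y # zs) \<longrightarrow> {(y # zs) ! i, (y # zs) ! Suc i} \<in> F)" ..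
  next
    assume h: "{x, y} \<in> F \<and> (\<forall>i. Suc i < length (y # zs) \<longrightarrow> {(y # zs) ! i, (y # zs) ! Suc i} \<in> F)"
    show "\<forall>i. Suc i < length (x # y # zs) \<longrightarrow> {(x # y # zs) ! i, (x # y # zs) ! Suc i} \<in> F"
    proof (intro allI impI)
      fix i assume i: "Suc i < length (x # y # zs)"
      show "{(x # y # zs) ! i, (x # y # zs) ! Suc i} \<in> F"
      proof (cases i)
        case 0 then show ?thesis using h by simp
      next
        case (Suc j) then show ?thesis using h i by simp
      qed
    qed
  qed
  then show ?case using 3 by simp
qed

lemma is_path_iff: "is_path F u v xs \<longleftrightarrow> xs \<noteq> [] \<and> hd xs = u \<and> last xs = v \<and> distinct xs \<and> pedges xs \<subseteq> F"
  unfolding is_path_def edges_cond_pedges ..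

lemma pedges_append: "pedges (xs @ y # ys) = pedges (xs @ [y]) \<union> pedges (y # ys)"
proof (induction xs rule: pedges.induct)
  case 1 then show ?case by simp
next
  case (2 x) then show ?case by (cases ys) auto
next
  case (3 x z zs) then show ?case by auto
qed

lemma pedges_rev: "pedges (rev xs) = pedges xs"
proof (induction xs rule: pedges.induct)
  case 1 then show ?case by simp
next
  case (2 x) then show ?case by simp
next
  case (3 x y zs)
  have "pedges (rev (x # y # zs)) = pedges (rev zs @ y # [x])" by simp
  also have "... = pedges (rev zs @ [y]) \<union> pedges [y, x]" by (rule pedges_append)
  also have "... = pedges (y # zs) \<union> {{x, y}}" using 3 by (simp add: insert_commute)
  finally show ?case by auto
qed

lemma pedges_sub_set: "f \<in> pedges xs \<Longrightarrow> f \<subseteq> set xs"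
  by (induction xs rule: pedges.induct) auto

lemma pedges_ne: "distinct xs \<Longrightarrow> xs \<noteq> [] \<Longrightarrow> hd xs \<noteq> last xs \<Longrightarrow> pedges xs \<noteq> {}"
  by (induction xs rule: pedges.induct) auto

lemma pedges_vertices: "pedges xs \<subseteq> E \<Longrightarrow> \<forall>f\<in>E. f \<subseteq> V \<Longrightarrow> xs \<noteq> [] \<Longrightarrow> set xs \<subseteq> insert (hd xs) V"
proof (induction xs rule: pedges.induct)
  case (3 x y zs)
  then have "{x, y} \<subseteq> V" by auto
  moreover have "set (y # zs) \<subseteq> insert y V" using 3 by auto
  ultimately show ?case by auto
qed auto

lemma shortcut:
  "xs \<noteq> [] \<Longrightarrow> pedges xs \<subseteq> F \<Longrightarrow>
    \<exists>ys. ys \<noteq> [] \<and> hd ys = hd xs \<and> last ys = last xs \<and> distinct ys \<and> pedges ys \<subseteq> F \<and> set ys \<subseteq> set xs"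
proof (induction "length xs" arbitrary: xs rule: less_induct)
  case less
  show ?case
  proof (cases "distinct xs")
    case True then show ?thesis using less.prems by blast
  next
    case False
    then obtain p y q r where xs: "xs = p @ [y] @ q @ [y] @ r" using not_distinct_decomp by blast
    define xs' where "xs' = p @ y # r"
    have len: "length xs' < length xs" unfolding xs xs'_def by simp
    have ne: "xs' \<noteq> []" unfolding xs'_def by simp
    have xs2: "xs = p @ y # (q @ y # r)" using xs by simp
    have "pedges xs = pedges (p @ [y]) \<union> pedges (y # q @ y # r)" unfolding xs2 by (rule pedges_append)
    also have "pedges (y # q @ y # r) = pedges ((y # q) @ [y]) \<union> pedges (y # r)"
      using pedges_append[of "y # q" y r] by simp
    finally have "pedges xs = pedges (p @ [y]) \<union> (pedges ((y # q) @ [y]) \<union> pedges (y # r))" .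
    moreover have "pedges xs' = pedges (p @ [y]) \<union> pedges (y # r)" unfolding xs'_def by (rule pedges_append)
    ultimately have "pedges xs' \<subseteq> pedges xs" by blast
    then have pe: "pedges xs' \<subseteq> F" using less.prems by blast
    obtain ys where ys: "ys \<noteq> []" "hd ys = hd xs'" "last ys = last xs'" "distinct ys" "pedges ys \<subseteq> F" "set ys \<subseteq> set xs'"
      using less.hyps[OF len ne pe] by blast
    have h1: "hd xs' = hd xs" unfolding xs xs'_def by (cases p) auto
    have h2: "last xs' = last xs" unfolding xs xs'_def by (cases r) auto
    have h3: "set xs' \<subseteq> set xs" unfolding xs xs'_def by auto
    have "ys \<noteq> [] \<and> hd ys = hd xs \<and> last ys = last xs \<and> distinct ys \<and> pedges ys \<subseteq> F \<and> set ys \<subseteq> set xs"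
      using ys h1 h2 h3 by (simp add: subset_trans)
    then show ?thesis by (rule exI)
  qed
qed

lemma prefix_path:
  assumes "is_path F a z P" "z' \<in> set P"
  shows "is_path F a z' (takeWhile (\<lambda>x. x \<noteq> z') P @ [z'])"
proof -
  obtain pp rr where P: "P = pp @ z' # rr" and nz: "z' \<notin> set pp" using split_list_first[OF assms(2)] by blast
  have tw: "takeWhile (\<lambda>x. x \<noteq> z') P = pp" unfolding P using nz by (induction pp) auto
  have "distinct P" "hd P = a" "pedges P \<subseteq> F" using assms(1) unfolding is_path_iff by auto
  have h1: "hd (pp @ [z']) = a"
  proof (cases pp)
    case Nil then show ?thesis using \<open>hd P = a\<close> P by simp
  next
    case (Cons q qs) then show ?thesis using \<open>hd P = a\<close> P by simp
  qed
  have h2: "distinct (pp @ [z'])" using \<open>distinct P\<close> P by simp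
  have h3: "pedges (pp @ [z']) \<subseteq> F" using \<open>pedges P \<subseteq> F\<close> pedges_append[of pp z' rr] P by blast
  show ?thesis unfolding tw is_path_iff using h1 h2 h3 by simp
qed

lemma split_at_edge:
  assumes "distinct xs" "xs \<noteq> []" "hd xs = a" "pedges xs \<subseteq> F" "a \<noteq> b"
  shows "pedges xs \<subseteq> F - {{a, b}} \<or> (\<exists>r. xs = a # b # r \<and> pedges (b # r) \<subseteq> F - {{a, b}})"
proof -
  obtain r where xs: "xs = a # r" using assms(2,3) by (cases xs) auto
  have nab: "{a, b} \<notin> pedges zs" if "a \<notin> set zs" for zs
    using pedges_sub_set[of "{a,b}" zs] that by auto
  show ?thesis
  proof (cases r)
    case Nil then show ?thesis unfolding xs by simp
  next
    case (Cons x r')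
    have an: "a \<notin> set (x # r')" using assms(1) xs Cons by simp
    have pe: "pedges xs = insert {a, x} (pedges (x # r'))" unfolding xs Cons by simp
    show ?thesis
    proof (cases "{a, x} = {a, b}")
      case True
      then have "x = b" using assms(5) by (metis doubleton_eq_iff)
      then show ?thesis using pe assms(4) nab[OF an] xs Cons by auto
    next
      case False
      then show ?thesis using pe assms(4) nab[OF an] by auto
    qed
  qed
qed

lemma tree_parts:
  assumes "is_tree V E"
  shows "finite V" "\<forall>f\<in>E. \<exists>u v. f = {u, v} \<and> u \<noteq> v \<and> u \<in> V \<and> v \<in> V"
    "\<forall>u\<in>V. \<forall>v\<in>V. \<exists>!xs. is_path E u v xs"
proof -
  have h: "finite V \<and> V \<noteq> {} \<and> (\<forall>f\<in>E. \<exists>u v. f = {u, v} \<and> u \<noteq> v \<and> u \<in> V \<and> v \<in> V) \<and>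
     (\<forall>u\<in>V. \<forall>v\<in>V. \<exists>!xs. is_path E u v xs)" using assms unfolding is_tree_def .
  show "finite V" by (rule conjunct1[OF h])
  show "\<forall>f\<in>E. \<exists>u v. f = {u, v} \<and> u \<noteq> v \<and> u \<in> V \<and> v \<in> V"
    by (rule h[THEN conjunct2, THEN conjunct2, THEN conjunct1])
  show "\<forall>u\<in>V. \<forall>v\<in>V. \<exists>!xs. is_path E u v xs"
    by (rule h[THEN conjunct2, THEN conjunct2, THEN conjunct2])
qed

lemma tree_basic:
  assumes "is_tree V E"
  shows "finite V" "\<forall>f\<in>E. f \<subseteq> V" "finite E"
proof -
  show fV: "finite V" by (rule tree_parts(1)[OF assms])
  have h2: "\<forall>f\<in>E. \<exists>u v. f = {u, v} \<and> u \<noteq> v \<and> u \<in> V \<and> v \<in> V" by (rule tree_parts(2)[OF assms])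
  show EV: "\<forall>f\<in>E. f \<subseteq> V"
  proof
    fix f assume "f \<in> E"
    then obtain u v where "f = {u, v}" "u \<in> V" "v \<in> V" using h2 by blast
    then show "f \<subseteq> V" by simp
  qed
  have "E \<subseteq> Pow V" using EV by blast
  then show "finite E" using fV by (meson finite_Pow_iff finite_subset)
qed

lemma tree_path_is_path:
  assumes "is_tree V E" "u \<in> V" "v \<in> V"
  shows "is_path E u v (tree_path E u v)"
proof -
  have "\<exists>!xs. is_path E u v xs" by (rule tree_parts(3)[OF assms(1), rule_format, OF assms(2,3)])
  then show ?thesis unfolding tree_path_def by (rule theI')
qed

lemma tree_path_unique:
  assumes "is_tree V E" "u \<in> V" "v \<in> V" "is_path E u v xs"
  shows "tree_path E u v = xs"
proof -
  have "\<exists>!xs. is_path E u v xs" by (rule tree_parts(3)[OF assms(1), rule_format, OF assms(2,3)])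
  then show ?thesis using assms(4) tree_path_is_path[OF assms(1-3)] by blast
qed

lemma is_path_rev: "is_path F u v xs \<Longrightarrow> is_path F v u (rev xs)"
  unfolding is_path_iff by (simp add: pedges_rev hd_rev last_rev)

lemma tree_pe_sym:
  assumes "is_tree V E" "u \<in> V" "v \<in> V"
  shows "path_edges (tree_path E v u) = path_edges (tree_path E u v)"
proof -
  have "tree_path E v u = rev (tree_path E u v)"
    using tree_path_unique[OF assms(1,3,2) is_path_rev[OF tree_path_is_path[OF assms]]] .
  then show ?thesis by (simp add: path_edges_pedges pedges_rev)
qed

lemma walk_join:
  assumes "is_path F r u P" "pedges Q \<subseteq> F" "Q \<noteq> []" "hd Q = u"
  shows "\<exists>ys. is_path F r (last Q) ys \<and> set ys \<subseteq> set P \<union> set Q"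
proof -
  have P: "P \<noteq> []" "hd P = r" "last P = u" "pedges P \<subseteq> F" using assms(1) unfolding is_path_iff by auto
  obtain p where p: "P = p @ [u]" using P(1,3) by (metis append_butlast_last_id)
  obtain q where q: "Q = u # q" using assms(3,4) by (cases Q) auto
  define W where "W = p @ u # q"
  have "pedges W = pedges (p @ [u]) \<union> pedges (u # q)" unfolding W_def by (rule pedges_append)
  then have pW: "pedges W \<subseteq> F" using P(4) assms(2) p q by simp
  have hW: "hd W = r" using P(2) p unfolding W_def by (cases p) auto
  have lW: "last W = last Q" unfolding W_def q by simp
  have sW: "set W = set P \<union> set Q" unfolding W_def p q by auto
  obtain ys where "ys \<noteq> []" "hd ys = hd W" "last ys = last W" "distinct ys" "pedges ys \<subseteq> F" "set ys \<subseteq> set W"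
    using shortcut[of W F] pW unfolding W_def by blast
  then show ?thesis unfolding is_path_iff using hW lW sW by auto
qed

lemma path_in_comp:
  assumes tree: "is_tree V E" and rV: "r \<in> V" and P: "is_path (E - {e}) r z P"
  shows "set P \<subseteq> comp_vertices V E e r"
proof
  fix z' assume z': "z' \<in> set P"
  have "pedges P \<subseteq> E" "P \<noteq> []" "hd P = r" using P unfolding is_path_iff by auto
  then have "set P \<subseteq> V" using pedges_vertices[of P E V] tree_basic(2)[OF tree] rV by auto
  then have "z' \<in> V" using z' by blast
  moreover have "is_path (E - {e}) r z' (takeWhile (\<lambda>x. x \<noteq> z') P @ [z'])" by (rule prefix_path[OF P z'])
  ultimately show "z' \<in> comp_vertices V E e r" unfolding comp_vertices_def by blast
qed

lemma root_in_comp: "r \<in> V \<Longrightarrow> r \<in> comp_vertices V E e r"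
  unfolding comp_vertices_def is_path_iff by (intro CollectI conjI exI[of _ "[r]"]) auto

lemma same_comp_path:
  assumes tree: "is_tree V E" and rV: "r \<in> V"
    and u: "u \<in> comp_vertices V E e r" and v: "v \<in> comp_vertices V E e r"
  shows "\<exists>Q. is_path (E - {e}) u v Q \<and> set Q \<subseteq> comp_vertices V E e r"
proof -
  obtain P1 where P1: "is_path (E - {e}) r u P1" using u unfolding comp_vertices_def by blast
  obtain P2 where P2: "is_path (E - {e}) r v P2" using v unfolding comp_vertices_def by blast
  have R: "is_path (E - {e}) u r (rev P1)" by (rule is_path_rev[OF P1])
  have "pedges P2 \<subseteq> E - {e}" "P2 \<noteq> []" "hd P2 = r" "last P2 = v" using P2 unfolding is_path_iff by auto
  then obtain ys where ys: "is_path (E - {e}) u v ys" "set ys \<subseteq> set (rev P1) \<union> set P2"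
    using walk_join[OF R] by metis
  have "set P1 \<subseteq> comp_vertices V E e r" "set P2 \<subseteq> comp_vertices V E e r"
    using path_in_comp[OF tree rV P1] path_in_comp[OF tree rV P2] .
  then show ?thesis using ys by auto
qed

lemma path_comp_edges:
  assumes "is_path (E - {e}) u v Q" "set Q \<subseteq> comp_vertices V E e r"
  shows "is_path (comp_edges V E e r) u v Q"
proof -
  have "pedges Q \<subseteq> comp_edges V E e r"
  proof
    fix f assume f: "f \<in> pedges Q"
    then have "f \<in> E - {e}" using assms(1) unfolding is_path_iff by auto
    moreover have "f \<subseteq> comp_vertices V E e r" using pedges_sub_set[OF f] assms(2) by blast
    ultimately show "f \<in> comp_edges V E e r" unfolding comp_edges_def by blast
  qed
  then show ?thesis using assms(1) unfolding is_path_iff by auto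
qed

lemma comp_edges_sub: "comp_edges V E e r \<subseteq> E - {e}"
  unfolding comp_edges_def by blast

lemma is_path_mono: "is_path F u v xs \<Longrightarrow> F \<subseteq> G \<Longrightarrow> is_path G u v xs"
  unfolding is_path_iff by blast

lemma tree_path_comp:
  assumes tree: "is_tree V E" and rV: "r \<in> V"
    and u: "u \<in> comp_vertices V E e r" and v: "v \<in> comp_vertices V E e r"
  shows "tree_path (comp_edges V E e r) u v = tree_path E u v"
    "is_path (comp_edges V E e r) u v (tree_path E u v)"
proof -
  obtain Q where Q: "is_path (E - {e}) u v Q" "set Q \<subseteq> comp_vertices V E e r"
    using same_comp_path[OF tree rV u v] by blast
  have QE1: "is_path (comp_edges V E e r) u v Q" by (rule path_comp_edges[OF Q])
  have uV: "u \<in> V" and vV: "v \<in> V" using u v unfolding comp_vertices_def by auto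
  have E1E: "comp_edges V E e r \<subseteq> E" unfolding comp_edges_def by auto
  have Qt: "tree_path E u v = Q" using tree_path_unique[OF tree uV vV is_path_mono[OF QE1 E1E]] .
  show "is_path (comp_edges V E e r) u v (tree_path E u v)" using QE1 Qt by simp
  show "tree_path (comp_edges V E e r) u v = tree_path E u v"
    unfolding tree_path_def[of "comp_edges V E e r"]
  proof (rule the_equality)
    show "is_path (comp_edges V E e r) u v (tree_path E u v)" using QE1 Qt by simp
    fix xs assume "is_path (comp_edges V E e r) u v xs"
    then have "is_path E u v xs" by (rule is_path_mono[OF _ E1E])
    then show "xs = tree_path E u v" using tree_path_unique[OF tree uV vV] by simp
  qed
qed

lemma ab_facts:
  assumes tree: "is_tree V E" and ed: "{a, b} \<in> E"
  shows "a \<noteq> b" "a \<in> V" "b \<in> V"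
proof -
  obtain u v where "{a, b} = {u, v}" "u \<noteq> v" "u \<in> V" "v \<in> V"
    using tree_parts(2)[OF tree] ed by blast
  then show "a \<noteq> b" "a \<in> V" "b \<in> V" by (auto simp: doubleton_eq_iff)
qed

lemma comps_disjoint:
  assumes tree: "is_tree V E" and ed: "{a, b} \<in> E"
  shows "comp_vertices V E {a, b} a \<inter> comp_vertices V E {a, b} b = {}"
proof (rule ccontr)
  assume "comp_vertices V E {a, b} a \<inter> comp_vertices V E {a, b} b \<noteq> {}"
  then obtain z where za: "z \<in> comp_vertices V E {a, b} a" and zb: "z \<in> comp_vertices V E {a, b} b" by blast
  have ab: "a \<noteq> b" "a \<in> V" "b \<in> V" using ab_facts[OF tree ed] by auto
  obtain P1 where P1: "is_path (E - {{a, b}}) a z P1" using za unfolding comp_vertices_def by blast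
  obtain P2 where P2: "is_path (E - {{a, b}}) b z P2" using zb unfolding comp_vertices_def by blast
  have R: "is_path (E - {{a, b}}) z b (rev P2)" by (rule is_path_rev[OF P2])
  have "pedges (rev P2) \<subseteq> E - {{a, b}}" "rev P2 \<noteq> []" "hd (rev P2) = z" "last (rev P2) = b"
    using R unfolding is_path_iff by auto
  then obtain ys where ys: "is_path (E - {{a, b}}) a b ys"
    using walk_join[OF P1] by metis
  have "is_path E a b [a, b]" unfolding is_path_iff using ab ed by simp
  then have "tree_path E a b = [a, b]" using tree_path_unique[OF tree ab(2,3)] by blast
  moreover have "tree_path E a b = ys" using tree_path_unique[OF tree ab(2,3) is_path_mono[OF ys]] by blast
  ultimately have "ys = [a, b]" by simp
  then show False using ys unfolding is_path_iff by simp
qed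

lemma comps_cover:
  assumes tree: "is_tree V E" and ed: "{a, b} \<in> E" and y: "y \<in> V"
  shows "y \<in> comp_vertices V E {a, b} a \<or> y \<in> comp_vertices V E {a, b} b"
proof -
  have ab: "a \<noteq> b" "a \<in> V" "b \<in> V" using ab_facts[OF tree ed] by auto
  define xs where "xs = tree_path E a y"
  have p: "is_path E a y xs" unfolding xs_def by (rule tree_path_is_path[OF tree ab(2) y])
  then have "distinct xs" "xs \<noteq> []" "hd xs = a" "pedges xs \<subseteq> E" "last xs = y" unfolding is_path_iff by auto
  then have "pedges xs \<subseteq> E - {{a, b}} \<or> (\<exists>r. xs = a # b # r \<and> pedges (b # r) \<subseteq> E - {{a, b}})"
    using split_at_edge[of xs a E b] ab(1) by blast
  then show ?thesis
  proof
    assume "pedges xs \<subseteq> E - {{a, b}}"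
    then have "is_path (E - {{a, b}}) a y xs" using p unfolding is_path_iff by auto
    then show ?thesis using y unfolding comp_vertices_def by blast
  next
    assume "\<exists>r. xs = a # b # r \<and> pedges (b # r) \<subseteq> E - {{a, b}}"
    then obtain r where r: "xs = a # b # r" "pedges (b # r) \<subseteq> E - {{a, b}}" by blast
    have "is_path (E - {{a, b}}) b y (b # r)" using p r unfolding is_path_iff by auto
    then show ?thesis using y unfolding comp_vertices_def by blast
  qed
qed

lemma cross_edge:
  assumes tree: "is_tree V E" and ed: "{a, b} \<in> E"
    and u: "u \<in> comp_vertices V E {a, b} a" and v: "v \<in> comp_vertices V E {a, b} b"
  shows "{a, b} \<in> path_edges (tree_path E u v)"
proof (rule ccontr)
  assume nin: "{a, b} \<notin> path_edges (tree_path E u v)"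
  have ab: "a \<noteq> b" "a \<in> V" "b \<in> V" using ab_facts[OF tree ed] by auto
  have uV: "u \<in> V" and vV: "v \<in> V" using u v unfolding comp_vertices_def by auto
  define Q where "Q = tree_path E u v"
  have Q: "is_path E u v Q" unfolding Q_def by (rule tree_path_is_path[OF tree uV vV])
  have pQ: "pedges Q \<subseteq> E - {{a, b}}" using Q nin unfolding Q_def is_path_iff path_edges_pedges by auto
  obtain P1 where P1: "is_path (E - {{a, b}}) a u P1" using u unfolding comp_vertices_def by blast
  have "Q \<noteq> []" "hd Q = u" "last Q = v" using Q unfolding is_path_iff by auto
  then obtain ys where "is_path (E - {{a, b}}) a v ys" using walk_join[OF P1 pQ] by metis
  then have "v \<in> comp_vertices V E {a, b} a" using vV unfolding comp_vertices_def by blast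
  then show False using v comps_disjoint[OF tree ed] by blast
qed

lemma edges_split:
  assumes tree: "is_tree V E" and ed: "{a, b} \<in> E"
  shows "E - {{a, b}} = comp_edges V E {a, b} a \<union> comp_edges V E {a, b} b"
    "comp_edges V E {a, b} a \<inter> comp_edges V E {a, b} b = {}"
proof -
  show "E - {{a, b}} = comp_edges V E {a, b} a \<union> comp_edges V E {a, b} b"
  proof (intro equalityI subsetI)
    fix f assume f: "f \<in> E - {{a, b}}"
    obtain x y where xy: "f = {x, y}" "x \<in> V" "y \<in> V" using f tree_parts(2)[OF tree] by blast
    have "pedges [x, y] \<subseteq> E - {{a, b}}" using f xy by simp
    then have pxy: "pedges [x, y] \<subseteq> E - {{a, b}}" "pedges [y, x] \<subseteq> E - {{a, b}}" using f xy by (auto simp: insert_commute)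
    have step: "y' \<in> comp_vertices V E {a, b} r" if "x' \<in> comp_vertices V E {a, b} r" "pedges [x', y'] \<subseteq> E - {{a, b}}" "y' \<in> V" for x' y' r
    proof -
      note hyp = that
      obtain P where P: "is_path (E - {{a, b}}) r x' P" using hyp(1) unfolding comp_vertices_def by blast
      obtain ys where "is_path (E - {{a, b}}) r y' ys" using walk_join[OF P hyp(2)] by auto
      then show ?thesis using hyp(3) unfolding comp_vertices_def by blast
    qed
    have "x \<in> comp_vertices V E {a, b} a \<or> x \<in> comp_vertices V E {a, b} b" by (rule comps_cover[OF tree ed xy(2)])
    then show "f \<in> comp_edges V E {a, b} a \<union> comp_edges V E {a, b} b"
    proof
      assume "x \<in> comp_vertices V E {a, b} a"
      moreover then have "y \<in> comp_vertices V E {a, b} a" using step pxy xy by blast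
      ultimately show ?thesis using f xy unfolding comp_edges_def by auto
    next
      assume "x \<in> comp_vertices V E {a, b} b"
      moreover then have "y \<in> comp_vertices V E {a, b} b" using step pxy xy by blast
      ultimately show ?thesis using f xy unfolding comp_edges_def by auto
    qed
  next
    fix f assume "f \<in> comp_edges V E {a, b} a \<union> comp_edges V E {a, b} b"
    then show "f \<in> E - {{a, b}}" unfolding comp_edges_def by blast
  qed
  show "comp_edges V E {a, b} a \<inter> comp_edges V E {a, b} b = {}"
  proof (rule ccontr)
    assume "comp_edges V E {a, b} a \<inter> comp_edges V E {a, b} b \<noteq> {}"
    then obtain f where f: "f \<in> E" "f \<subseteq> comp_vertices V E {a, b} a" "f \<subseteq> comp_vertices V E {a, b} b"
      unfolding comp_edges_def by blast
    obtain x y where "f = {x, y}" using f tree_parts(2)[OF tree] by blast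
    then show False using f comps_disjoint[OF tree ed] by blast
  qed
qed

definition RP :: "'a set \<Rightarrow> ('a set \<Rightarrow> real) \<Rightarrow> 'a set set" where
  "RP V w = {{u, v} | u v. u \<in> V \<and> v \<in> V \<and> u \<noteq> v \<and> w {u, v} > 0}"

definition PE :: "'a set set \<Rightarrow> 'a set \<Rightarrow> 'a set set" where
  "PE E p = \<Union>{path_edges (tree_path E u v) | u v. p = {u, v} \<and> u \<noteq> v}"

definition fw :: "'a set \<Rightarrow> 'a set set \<Rightarrow> ('a set \<Rightarrow> real) \<Rightarrow> 'a set set \<Rightarrow> real" where
  "fw V E w S = (\<Sum>p\<in>RP V w. w p * (if PE E p \<subseteq> S then 1 else 0))"

definition Hyp :: "'a set \<Rightarrow> 'a set set \<Rightarrow> bool" where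
  "Hyp V E \<longleftrightarrow> (\<forall>u\<in>V. \<forall>v\<in>V. u \<noteq> v \<longrightarrow> path_edges (tree_path E u v) \<subseteq> E \<and>
      path_edges (tree_path E u v) \<noteq> {} \<and> path_edges (tree_path E v u) = path_edges (tree_path E u v))"

lemma PE_eq:
  assumes H: "Hyp V E" and uv: "u \<in> V" "v \<in> V" "u \<noteq> v"
  shows "PE E {u, v} = path_edges (tree_path E u v)"
proof -
  have "{path_edges (tree_path E u' v') | u' v'. {u, v} = {u', v'} \<and> u' \<noteq> v'}
      = {path_edges (tree_path E u v), path_edges (tree_path E v u)}"
    using uv by (auto simp: doubleton_eq_iff)
  then show ?thesis unfolding PE_def using H uv unfolding Hyp_def by auto
qed

lemma exists_last:
  assumes ds: "distinct s" and P: "finite P" "P \<noteq> {}" "P \<subseteq> set s"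
  shows "\<exists>g\<in>P. \<forall>h\<in>P. h = g \<or> h \<in> pre s g"
proof -
  obtain g where gP: "g \<in> P" and gmax: "\<forall>z\<in>P. card (pre s z) \<le> card (pre s g)"
  proof -
    have "Max ((\<lambda>z. card (pre s z)) ` P) \<in> (\<lambda>z. card (pre s z)) ` P" using P by simp
    then obtain g where "g \<in> P" "card (pre s g) = Max ((\<lambda>z. card (pre s z)) ` P)" by auto
    moreover have "\<forall>z\<in>P. card (pre s z) \<le> Max ((\<lambda>z. card (pre s z)) ` P)" using P by simp
    ultimately show ?thesis using that by auto
  qed
  have "h \<in> pre s g" if "h \<in> P" "h \<noteq> g" for h
  proof (rule ccontr)
    assume nz: "h \<notin> pre s g"
    have "h \<in> set s" "g \<in> set s" using that gP P by auto
    then have "g \<in> pre s h" using pre_excl[OF ds] nz that(2) by blast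
    then have sub: "pre s g \<subseteq> pre s h" using pre_trans[OF ds] by blast
    have "g \<notin> pre s g" by (rule pre_notin)
    then have "pre s g \<subset> pre s h" using sub \<open>g \<in> pre s h\<close> by blast
    moreover have "finite (pre s h)" unfolding pre_def by simp
    ultimately have "card (pre s g) < card (pre s h)" by (rule psubset_card_mono[rotated])
    then show False using gmax that(1) by fastforce
  qed
  then show ?thesis using gP by blast
qed

lemma completion_time_eq:
  assumes "distinct s"
  shows "completion_time c s g = sum c (insert g (pre s g))"
proof -
  have "sum_list (map c (takeWhile (\<lambda>y. y \<noteq> g) s)) = sum c (pre s g)"
    unfolding pre_def using assms by (simp add: sum.distinct_set_conv_list)
  moreover have "g \<notin> pre s g" by (rule pre_notin)
  moreover have "finite (pre s g)" unfolding pre_def by simp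
  ultimately show ?thesis unfolding completion_time_def by simp
qed

lemma conn_time_formula:
  fixes c :: "'a set \<Rightarrow> real"
  assumes ds: "distinct s" and ss: "set s = E" and c0: "\<forall>x\<in>E. c x \<ge> 0"
    and P: "P \<subseteq> E" "P \<noteq> {}"
  shows "Max (completion_time c s ` P) = (\<Sum>x\<in>E. c x * (if P \<subseteq> pre s x then 0 else 1))"
proof -
  have finE: "finite E" using ss by auto
  have finP: "finite P" using P finE finite_subset by blast
  obtain g where gP: "g \<in> P" and glast: "\<forall>h\<in>P. h = g \<or> h \<in> pre s g"
    using exists_last[OF ds finP P(2)] P ss by blast
  have preE: "pre s x \<subseteq> E" for x using pre_subset[of s x] ss by simp
  have sub: "insert h (pre s h) \<subseteq> insert g (pre s g)" if "h \<in> P" for h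
  proof -
    have "h = g \<or> h \<in> pre s g" using glast that by blast
    then show ?thesis
    proof
      assume "h \<in> pre s g"
      then show ?thesis using pre_trans[OF ds, of h g] by blast
    qed simp
  qed
  have "Max (completion_time c s ` P) = completion_time c s g"
  proof (rule Max_eqI)
    show "finite (completion_time c s ` P)" using finP by simp
    show "completion_time c s g \<in> completion_time c s ` P" using gP by simp
    fix t assume "t \<in> completion_time c s ` P"
    then obtain h where h: "h \<in> P" "t = completion_time c s h" by blast
    have "sum c (insert h (pre s h)) \<le> sum c (insert g (pre s g))"
    proof (rule sum_mono2)
      show "finite (insert g (pre s g))" unfolding pre_def by simp
      show "insert h (pre s h) \<subseteq> insert g (pre s g)" using sub[OF h(1)] .
      fix x assume "x \<in> insert g (pre s g) - insert h (pre s h)"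
      then have "x \<in> E" using gP P preE by blast
      then show "0 \<le> c x" using c0 by blast
    qed
    then show "t \<le> completion_time c s g" using h completion_time_eq[OF ds] by simp
  qed
  also have "... = sum c (insert g (pre s g))" by (rule completion_time_eq[OF ds])
  also have "insert g (pre s g) = {x\<in>E. \<not> P \<subseteq> pre s x}"
  proof (intro equalityI subsetI)
    fix x assume x: "x \<in> insert g (pre s g)"
    have xE: "x \<in> E" using x gP P preE by blast
    have "g \<notin> pre s x"
    proof
      assume gx: "g \<in> pre s x"
      show False
      proof (cases "x = g")
        case True then show False using gx pre_notin by metis
      next
        case False
        then have "x \<in> pre s g" using x by blast
        moreover have "x \<in> set s" "g \<in> set s" using xE gP P ss by auto
        ultimately show False using pre_excl[OF ds] gx False by blast
      qed
    qed
    then show "x \<in> {x\<in>E. \<not> P \<subseteq> pre s x}" using xE gP by blast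
  next
    fix x assume "x \<in> {x\<in>E. \<not> P \<subseteq> pre s x}"
    then have xE: "x \<in> E" and nP: "\<not> P \<subseteq> pre s x" by auto
    show "x \<in> insert g (pre s g)"
    proof (rule ccontr)
      assume "x \<notin> insert g (pre s g)"
      then have "x \<noteq> g" "x \<notin> pre s g" by auto
      moreover have "x \<in> set s" "g \<in> set s" using xE gP P ss by auto
      ultimately have "g \<in> pre s x" using pre_excl[OF ds] by blast
      then have "insert g (pre s g) \<subseteq> pre s x" using pre_trans[OF ds] by blast
      then have "P \<subseteq> pre s x" using glast by blast
      then show False using nP by simp
    qed
  qed
  also have "sum c {x\<in>E. \<not> P \<subseteq> pre s x} = (\<Sum>x\<in>E. c x * (if P \<subseteq> pre s x then 0 else 1))"
  proof -
    have "sum c {x\<in>E. \<not> P \<subseteq> pre s x} = (\<Sum>x\<in>E. if \<not> P \<subseteq> pre s x then c x else 0)"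
      by (rule sum.inter_filter[OF finE])
    also have "... = (\<Sum>x\<in>E. c x * (if P \<subseteq> pre s x then 0 else 1))"
      by (intro sum.cong) auto
    finally show ?thesis .
  qed
  finally show ?thesis .
qed

lemma pct_eq:
  assumes H: "Hyp V E" and uv: "u \<in> V" "v \<in> V" "u \<noteq> v"
  shows "pair_connection_time E c s {u, v} = connection_time E c s u v"
  unfolding pair_connection_time_def
proof (rule the_equality)
  show "\<exists>u' v'. {u, v} = {u', v'} \<and> u' \<noteq> v' \<and> connection_time E c s u v = connection_time E c s u' v'"
    using uv by blast
  fix t assume "\<exists>u' v'. {u, v} = {u', v'} \<and> u' \<noteq> v' \<and> t = connection_time E c s u' v'"
  then obtain u' v' where h: "{u, v} = {u', v'}" "t = connection_time E c s u' v'" by blast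
  have sym: "connection_time E c s v u = connection_time E c s u v"
    unfolding connection_time_def using H uv unfolding Hyp_def by metis
  from h(1) have "(u' = u \<and> v' = v) \<or> (u' = v \<and> v' = u)" by (auto simp: doubleton_eq_iff)
  then show "t = connection_time E c s u v" using h(2) sym by auto
qed

lemma cost_Acost:
  fixes c :: "'a set \<Rightarrow> real"
  assumes H: "Hyp V E" and finV: "finite V" and ds: "distinct s" and ss: "set s = E"
    and c0: "\<forall>x\<in>E. c x \<ge> 0"
  shows "cost V E c w s = Acost (fw V E w) c E s"
proof -
  define I where "I = (\<lambda>p x. if PE E p \<subseteq> pre s x then (0::real) else 1)"
  have finRP: "finite (RP V w)"
  proof -
    have "RP V w \<subseteq> Pow V" unfolding RP_def by auto
    then show ?thesis using finV by (meson finite_Pow_iff finite_subset)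
  qed
  have finE: "finite E" using ss by auto
  have A: "PE E p \<subseteq> E \<and> pair_connection_time E c s p = (\<Sum>x\<in>E. c x * I p x)" if "p \<in> RP V w" for p
  proof -
    note hyp = that
    obtain u v where uv: "p = {u, v}" "u \<in> V" "v \<in> V" "u \<noteq> v" using hyp unfolding RP_def by blast
    have pe: "PE E p = path_edges (tree_path E u v)" using PE_eq[OF H uv(2-4)] uv(1) by simp
    have sub: "PE E p \<subseteq> E" "PE E p \<noteq> {}" using H uv pe unfolding Hyp_def by auto
    have "pair_connection_time E c s p = Max (completion_time c s ` PE E p)"
      using pct_eq[OF H uv(2-4)] uv(1) pe unfolding connection_time_def by simp
    also have "... = (\<Sum>x\<in>E. c x * I p x)" unfolding I_def by (rule conn_time_formula[OF ds ss c0 sub])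
    finally show ?thesis using sub by simp
  qed
  have "cost V E c w s = (\<Sum>p\<in>RP V w. w p * pair_connection_time E c s p)"
    unfolding cost_def RP_def ..
  also have "... = (\<Sum>p\<in>RP V w. \<Sum>x\<in>E. c x * (w p * I p x))"
    using A by (intro sum.cong refl) (simp add: sum_distrib_left algebra_simps)
  also have "... = (\<Sum>x\<in>E. \<Sum>p\<in>RP V w. c x * (w p * I p x))" by (rule sum.swap)
  also have "... = Acost (fw V E w) c E s"
    unfolding Acost_def
  proof (intro sum.cong refl)
    fix x assume "x \<in> E"
    have "fw V E w E - fw V E w (pre s x) = (\<Sum>p\<in>RP V w. w p * (if PE E p \<subseteq> E then 1 else 0) - w p * (if PE E p \<subseteq> pre s x then 1 else 0))"
      unfolding fw_def by (simp add: sum_subtractf)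
    also have "... = (\<Sum>p\<in>RP V w. w p * I p x)"
      unfolding I_def using A by (intro sum.cong refl) auto
    finally have "fw V E w E - fw V E w (pre s x) = (\<Sum>p\<in>RP V w. w p * I p x)" .
    then show "(\<Sum>p\<in>RP V w. c x * (w p * I p x)) = c x * (fw V E w E - fw V E w (pre s x))"
      by (simp add: sum_distrib_left)
  qed
  finally show ?thesis .
qed

lemma supermod_fw:
  assumes "\<forall>p. w p \<ge> 0"
  shows "supermod (fw V E w) U"
  unfolding supermod_def
proof (intro allI impI)
  fix A B :: "'a set set"
  have "w p * (if PE E p \<subseteq> A then 1 else 0) + w p * (if PE E p \<subseteq> B then 1 else 0)
     \<le> w p * (if PE E p \<subseteq> A \<union> B then 1 else 0) + w p * (if PE E p \<subseteq> A \<inter> B then 1 else 0)" for p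
    using assms[rule_format, of p] by auto
  then show "fw V E w A + fw V E w B \<le> fw V E w (A \<union> B) + fw V E w (A \<inter> B)"
    unfolding fw_def by (simp add: sum.distrib[symmetric] sum_mono)
qed

lemma Hyp_tree:
  assumes tree: "is_tree V E"
  shows "Hyp V E"
  unfolding Hyp_def
proof (intro ballI impI conjI)
  fix u v assume uv: "u \<in> V" "v \<in> V" "u \<noteq> v"
  have p: "is_path E u v (tree_path E u v)" by (rule tree_path_is_path[OF tree uv(1,2)])
  then show "path_edges (tree_path E u v) \<subseteq> E" unfolding is_path_iff path_edges_pedges by blast
  show "path_edges (tree_path E u v) \<noteq> {}" using p uv(3) pedges_ne unfolding is_path_iff path_edges_pedges by metis
  show "path_edges (tree_path E v u) = path_edges (tree_path E u v)" by (rule tree_pe_sym[OF tree uv(1,2)])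
qed

lemma Hyp_comp:
  assumes tree: "is_tree V E" and rV: "r \<in> V"
  shows "Hyp (comp_vertices V E e r) (comp_edges V E e r)"
  unfolding Hyp_def
proof (intro ballI impI conjI)
  fix u v assume u: "u \<in> comp_vertices V E e r" and v: "v \<in> comp_vertices V E e r" and uv: "u \<noteq> v"
  have uV: "u \<in> V" and vV: "v \<in> V" using u v unfolding comp_vertices_def by auto
  have t1: "tree_path (comp_edges V E e r) u v = tree_path E u v"
    and p1: "is_path (comp_edges V E e r) u v (tree_path E u v)" using tree_path_comp[OF tree rV u v] by auto
  have t2: "tree_path (comp_edges V E e r) v u = tree_path E v u" using tree_path_comp[OF tree rV v u] by auto
  show "path_edges (tree_path (comp_edges V E e r) u v) \<subseteq> comp_edges V E e r"
    using p1 t1 unfolding is_path_iff path_edges_pedges by simp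
  show "path_edges (tree_path (comp_edges V E e r) u v) \<noteq> {}"
    using Hyp_tree[OF tree] uV vV uv t1 unfolding Hyp_def by simp
  show "path_edges (tree_path (comp_edges V E e r) v u) = path_edges (tree_path (comp_edges V E e r) u v)"
    using t1 t2 tree_pe_sym[OF tree uV vV] by simp
qed

lemma fw_empty:
  assumes "Hyp V E"
  shows "fw V E w {} = 0"
proof -
  have "PE E p \<noteq> {}" if "p \<in> RP V w" for p
  proof -
    note hyp = that
    obtain u v where uv: "p = {u, v}" "u \<in> V" "v \<in> V" "u \<noteq> v" using hyp unfolding RP_def by blast
    then show ?thesis using PE_eq[OF assms uv(2-4)] assms unfolding Hyp_def by auto
  qed
  then show ?thesis unfolding fw_def by (intro sum.neutral) auto
qed

lemma RP_comp:
  assumes "V1 \<subseteq> V"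
  shows "RP V1 w = {p \<in> RP V w. p \<subseteq> V1}"
proof (intro equalityI subsetI)
  fix p assume "p \<in> RP V1 w"
  then obtain u v where "p = {u, v}" "u \<in> V1" "v \<in> V1" "u \<noteq> v" "w {u, v} > 0" unfolding RP_def by blast
  then show "p \<in> {p \<in> RP V w. p \<subseteq> V1}" using assms unfolding RP_def by blast
next
  fix p assume "p \<in> {p \<in> RP V w. p \<subseteq> V1}"
  then obtain u v where "p = {u, v}" "u \<noteq> v" "w {u, v} > 0" "p \<subseteq> V1" unfolding RP_def by blast
  then show "p \<in> RP V1 w" unfolding RP_def by blast
qed

lemma PE_comp:
  assumes tree: "is_tree V E" and rV: "r \<in> V" and p: "p \<in> RP (comp_vertices V E e r) w"
  shows "PE E p = PE (comp_edges V E e r) p" "PE (comp_edges V E e r) p \<subseteq> comp_edges V E e r"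
proof -
  obtain u v where uv: "p = {u, v}" "u \<in> comp_vertices V E e r" "v \<in> comp_vertices V E e r" "u \<noteq> v"
    using p unfolding RP_def by blast
  have uV: "u \<in> V" and vV: "v \<in> V" using uv unfolding comp_vertices_def by auto
  have H1: "Hyp (comp_vertices V E e r) (comp_edges V E e r)" by (rule Hyp_comp[OF tree rV])
  have "PE (comp_edges V E e r) p = path_edges (tree_path (comp_edges V E e r) u v)"
    using PE_eq[OF H1 uv(2-4)] uv(1) by simp
  also have "... = path_edges (tree_path E u v)" using tree_path_comp[OF tree rV uv(2,3)] by simp
  also have "... = PE E p" using PE_eq[OF Hyp_tree[OF tree] uV vV uv(4)] uv(1) by simp
  finally show "PE E p = PE (comp_edges V E e r) p" by simp
  show "PE (comp_edges V E e r) p \<subseteq> comp_edges V E e r"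
    using PE_eq[OF H1 uv(2-4)] uv(1) H1 uv unfolding Hyp_def by auto
qed

lemma fw_decomp:
  assumes tree: "is_tree V E" and ed: "{a, b} \<in> E" and S: "{a, b} \<notin> S"
  shows "fw V E w S = fw (comp_vertices V E {a, b} a) (comp_edges V E {a, b} a) w (S \<inter> comp_edges V E {a, b} a)
           + fw (comp_vertices V E {a, b} b) (comp_edges V E {a, b} b) w (S \<inter> comp_edges V E {a, b} b)"
proof -
  define V1 where "V1 = comp_vertices V E {a, b} a"
  define V2 where "V2 = comp_vertices V E {a, b} b"
  define E1 where "E1 = comp_edges V E {a, b} a"
  define E2 where "E2 = comp_edges V E {a, b} b"
  have ab: "a \<noteq> b" "a \<in> V" "b \<in> V" using ab_facts[OF tree ed] by auto
  have V1V: "V1 \<subseteq> V" and V2V: "V2 \<subseteq> V" unfolding V1_def V2_def comp_vertices_def by auto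
  have dj: "V1 \<inter> V2 = {}" unfolding V1_def V2_def by (rule comps_disjoint[OF tree ed])
  have finV: "finite V" using tree_basic[OF tree] by simp
  define g where "g = (\<lambda>p. w p * (if PE E p \<subseteq> S then 1 else (0::real)))"
  have finRP: "finite (RP V w)"
  proof -
    have "RP V w \<subseteq> Pow V" unfolding RP_def by auto
    then show ?thesis using finV by (meson finite_Pow_iff finite_subset)
  qed
  have R1: "RP V1 w = {p \<in> RP V w. p \<subseteq> V1}" by (rule RP_comp[OF V1V])
  have R2: "RP V2 w = {p \<in> RP V w. p \<subseteq> V2}" by (rule RP_comp[OF V2V])
  have zero: "g p = 0" if "p \<in> RP V w - (RP V1 w \<union> RP V2 w)" for p
  proof -
    note hyp = that
    obtain u v where uv: "p = {u, v}" "u \<in> V" "v \<in> V" "u \<noteq> v" using hyp unfolding RP_def by blast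
    have n1: "\<not> p \<subseteq> V1" and n2: "\<not> p \<subseteq> V2" using that R1 R2 by auto
    have cu: "u \<in> V1 \<or> u \<in> V2" and cv: "v \<in> V1 \<or> v \<in> V2"
      using comps_cover[OF tree ed] uv unfolding V1_def V2_def by auto
    have "(u \<in> V1 \<and> v \<in> V2) \<or> (v \<in> V1 \<and> u \<in> V2)" using cu cv n1 n2 uv(1) by auto
    then have "{a, b} \<in> PE E p"
    proof
      assume h: "u \<in> V1 \<and> v \<in> V2"
      then show ?thesis using cross_edge[OF tree ed, of u v] PE_eq[OF Hyp_tree[OF tree] uv(2-4)] uv(1)
        unfolding V1_def V2_def by simp
    next
      assume h: "v \<in> V1 \<and> u \<in> V2"
      have "p = {v, u}" using uv(1) by auto
      then show ?thesis using cross_edge[OF tree ed, of v u] PE_eq[OF Hyp_tree[OF tree] uv(3) uv(2)] uv(4) h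
        unfolding V1_def V2_def by auto
    qed
    then show ?thesis unfolding g_def using S by auto
  qed
  have "fw V E w S = sum g (RP V w)" unfolding fw_def g_def ..
  also have "... = sum g (RP V1 w \<union> RP V2 w)"
    using zero R1 R2 finRP by (intro sum.mono_neutral_right) auto
  also have "... = sum g (RP V1 w) + sum g (RP V2 w)"
  proof (rule sum.union_disjoint)
    show "finite (RP V1 w)" "finite (RP V2 w)" using R1 R2 finRP by auto
    show "RP V1 w \<inter> RP V2 w = {}"
    proof (rule ccontr)
      assume "RP V1 w \<inter> RP V2 w \<noteq> {}"
      then obtain p where p1: "p \<in> RP V1 w" and p2: "p \<in> RP V2 w" by blast
      have s1: "p \<subseteq> V1" using p1 R1 by auto
      have s2: "p \<subseteq> V2" using p2 R2 by auto
      obtain u v where "p = {u, v}" using p1 unfolding RP_def by blast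
      then show False using dj s1 s2 by blast
    qed
  qed
  also have "sum g (RP V1 w) = fw V1 E1 w (S \<inter> E1)"
    unfolding fw_def g_def
  proof (intro sum.cong refl)
    fix p assume "p \<in> RP V1 w"
    then have "PE E p = PE E1 p" "PE E1 p \<subseteq> E1" using PE_comp[OF tree ab(2)] unfolding V1_def E1_def by auto
    then show "w p * (if PE E p \<subseteq> S then 1 else 0) = w p * (if PE E1 p \<subseteq> S \<inter> E1 then 1 else 0)" by auto
  qed
  also have "sum g (RP V2 w) = fw V2 E2 w (S \<inter> E2)"
    unfolding fw_def g_def
  proof (intro sum.cong refl)
    fix p assume "p \<in> RP V2 w"
    then have "PE E p = PE E2 p" "PE E2 p \<subseteq> E2" using PE_comp[OF tree ab(3)] unfolding V2_def E2_def by auto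
    then show "w p * (if PE E p \<subseteq> S then 1 else 0) = w p * (if PE E2 p \<subseteq> S \<inter> E2 then 1 else 0)" by auto
  qed
  finally show ?thesis unfolding V1_def V2_def E1_def E2_def .
qed

theorem lemma1:
  fixes V :: "'a set" and E :: "'a set set" and c w :: "'a set \<Rightarrow> real"
    and a b :: 'a and S1 S2 :: "'a set list"
  assumes tree: "is_tree V E"
    and c_pos: "\<forall>f\<in>E. c f > 0"
    and w_nonneg: "\<forall>p. w p \<ge> 0"
    and w_diag: "\<forall>v. w {v} = 0"
    and e_edge: "{a, b} \<in> E"
    and opt1: "optimal_A (comp_vertices V E {a, b} a) (comp_edges V E {a, b} a) c w S1"
    and opt2: "optimal_A (comp_vertices V E {a, b} b) (comp_edges V E {a, b} b) c w S2"
  shows "\<exists>s. optimal_A_last V E c w {a, b} s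
           \<and> filter (\<lambda>f. f \<in> comp_edges V E {a, b} a) s = S1
           \<and> filter (\<lambda>f. f \<in> comp_edges V E {a, b} b) s = S2"
proof -
  define V1 where "V1 = comp_vertices V E {a, b} a"
  define V2 where "V2 = comp_vertices V E {a, b} b"
  define E1 where "E1 = comp_edges V E {a, b} a"
  define E2 where "E2 = comp_edges V E {a, b} b"
  define E' where "E' = E - {{a, b}}"
  define f where "f = fw V E w"
  have ab: "a \<noteq> b" "a \<in> V" "b \<in> V" using ab_facts[OF tree e_edge] by auto
  have finV: "finite V" and finE: "finite E" using tree_basic[OF tree] by auto
  have finV1: "finite V1" and finV2: "finite V2" using finV unfolding V1_def V2_def comp_vertices_def by auto
  have Es: "E' = E1 \<union> E2" and Ed: "E1 \<inter> E2 = {}"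
    using edges_split[OF tree e_edge] unfolding E'_def E1_def E2_def by auto
  have finE1: "finite E1" and finE2: "finite E2" using Es finE unfolding E'_def by (metis finite_Diff finite_Un)+
  have E1E': "E1 \<subseteq> E'" and E2E': "E2 \<subseteq> E'" using Es by auto
  have eE': "{a, b} \<notin> E'" unfolding E'_def by simp
  have H: "Hyp V E" by (rule Hyp_tree[OF tree])
  have H1: "Hyp V1 E1" unfolding V1_def E1_def by (rule Hyp_comp[OF tree ab(2)])
  have H2: "Hyp V2 E2" unfolding V2_def E2_def by (rule Hyp_comp[OF tree ab(3)])
  have c0: "\<forall>x\<in>E. c x \<ge> 0" using c_pos by force
  have c01: "\<forall>x\<in>E1. c x \<ge> 0" and c02: "\<forall>x\<in>E2. c x \<ge> 0" using c0 E1E' E2E' unfolding E'_def by auto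
  have dec: "f S = fw V1 E1 w (S \<inter> E1) + fw V2 E2 w (S \<inter> E2)" if "S \<subseteq> E'" for S
    using fw_decomp[OF tree e_edge, of S w] that eE' unfolding f_def V1_def V2_def E1_def E2_def by blast
  have f1: "f S = fw V1 E1 w S" if "S \<subseteq> E1" for S
  proof -
    have "S \<inter> E1 = S" "S \<inter> E2 = {}" using that Ed by auto
    then show ?thesis using dec[of S] that E1E' fw_empty[OF H2] by auto
  qed
  have f2: "f S = fw V2 E2 w S" if "S \<subseteq> E2" for S
  proof -
    have "S \<inter> E2 = S" "S \<inter> E1 = {}" using that Ed by auto
    then show ?thesis using dec[of S] that E2E' fw_empty[OF H1] by auto
  qed
  have sp: "sep f E1 E2"
    unfolding sep_def
  proof (intro allI impI)
    fix S assume S: "S \<subseteq> E1 \<union> E2"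
    then have "f S = fw V1 E1 w (S \<inter> E1) + fw V2 E2 w (S \<inter> E2)" using dec Es by auto
    then show "f S = f (S \<inter> E1) + f (S \<inter> E2)" using f1[of "S \<inter> E1"] f2[of "S \<inter> E2"] by simp
  qed
  have sm: "supermod f (E1 \<union> E2)" unfolding f_def by (rule supermod_fw[OF w_nonneg])
  have f0: "f {} = 0" unfolding f_def by (rule fw_empty[OF H])
  have cpos: "\<forall>x\<in>E1 \<union> E2. c x > 0" using c_pos Es unfolding E'_def by auto
  have oo1: "opt_on f c E1 S1"
  proof -
    have d: "distinct S1" "set S1 = E1" using opt1 unfolding optimal_A_def s_sequence_def V1_def E1_def by auto
    have eq: "cost V1 E1 c w t = Acost f c E1 t" if "distinct t" "set t = E1" for t
    proof -
      have "cost V1 E1 c w t = Acost (fw V1 E1 w) c E1 t" by (rule cost_Acost[OF H1 finV1 that c01])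
      also have "... = Acost f c E1 t" using f1 that by (intro Acost_cong) auto
      finally show ?thesis .
    qed
    show ?thesis unfolding opt_on_def
      using d opt1 eq unfolding optimal_A_def s_sequence_def V1_def[symmetric] E1_def[symmetric] by metis
  qed
  have oo2: "opt_on f c E2 S2"
  proof -
    have d: "distinct S2" "set S2 = E2" using opt2 unfolding optimal_A_def s_sequence_def V2_def E2_def by auto
    have eq: "cost V2 E2 c w t = Acost f c E2 t" if "distinct t" "set t = E2" for t
    proof -
      have "cost V2 E2 c w t = Acost (fw V2 E2 w) c E2 t" by (rule cost_Acost[OF H2 finV2 that c02])
      also have "... = Acost f c E2 t" using f2 that by (intro Acost_cong) auto
      finally show ?thesis .
    qed
    show ?thesis unfolding opt_on_def
      using d opt2 eq unfolding optimal_A_def s_sequence_def V2_def[symmetric] E2_def[symmetric] by metis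
  qed
  obtain s' where s': "opt_on f c (E1 \<union> E2) s'" and fs1: "filter (\<lambda>x. x \<in> E1) s' = S1"
      and fs2: "filter (\<lambda>x. x \<in> E2) s' = S2"
    using merge[OF finE1 finE2 Ed cpos sm f0 sp oo1 oo2] by blast
  have ds': "distinct s'" and ss': "set s' = E'" using s' Es unfolding opt_on_def by auto
  define K where "K = sum c E' * (f E - f E') + Acost (\<lambda>S. f (S \<union> E') - f E') c (E - E') [{a, b}]"
  have costE: "cost V E c w (t @ [{a, b}]) = Acost f c E' t + K" if t: "distinct t" "set t = E'" for t
  proof -
    have d: "distinct (t @ [{a, b}])" using t eE' by simp
    have st: "set (t @ [{a, b}]) = E" using t e_edge unfolding E'_def by auto
    have "cost V E c w (t @ [{a, b}]) = Acost f c E (t @ [{a, b}])"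
      unfolding f_def by (rule cost_Acost[OF H finV d st c0])
    also have "... = Acost f c E' t + K"
      using Acost_append[OF d t(2) st finE, of f c] unfolding K_def by simp
    finally show ?thesis .
  qed
  define s where "s = s' @ [{a, b}]"
  have opts: "optimal_A_last V E c w {a, b} s"
    unfolding optimal_A_last_def
  proof (intro conjI allI impI)
    show "s_sequence E s" unfolding s_sequence_def s_def using ds' ss' eE' e_edge unfolding E'_def by auto
    show "s \<noteq> []" "last s = {a, b}" unfolding s_def by auto
    fix s'' assume h: "s_sequence E s'' \<and> s'' \<noteq> [] \<and> last s'' = {a, b}"
    define t where "t = butlast s''"
    have s''t: "s'' = t @ [{a, b}]" unfolding t_def using h by (metis append_butlast_last_id)
    have dt: "distinct t" and et: "{a, b} \<notin> set t" using h s''t unfolding s_sequence_def by auto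
    have st: "set t = E'" using h s''t et unfolding s_sequence_def E'_def by auto
    have "Acost f c E' s' \<le> Acost f c E' t" using s' dt st Es unfolding opt_on_def by auto
    then show "cost V E c w s \<le> cost V E c w s''"
      unfolding s_def s''t using costE[OF ds' ss'] costE[OF dt st] by simp
  qed
  have "filter (\<lambda>f. f \<in> E1) s = S1" unfolding s_def using fs1 E1E' eE' by auto
  moreover have "filter (\<lambda>f. f \<in> E2) s = S2" unfolding s_def using fs2 E2E' eE' by auto
  ultimately show ?thesis using opts unfolding E1_def E2_def by blast
qed

end
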